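(* Let $A\in\mathbb{R}^{n\times m}$ with $n\ge 2$ be such that the DSR graph $G_{A,A^t}$ is steady. (i) If each column of $A$ has at most two nonzero entries, then for every $B\in\mathcal{Q}_0(A^t)$, both $AB$ and $(AB)^{[2]}$ are $P_0$-matrices, and $AB$ is positive semistable. (ii) If each row of $A$ has at most two nonzero entries, then for every $B\in\mathcal{Q}_0(A^t)$, $AB$ is positive semistable.
   Context: For $M\in\mathbb{R}^{n\times m}$, $\mathcal{Q}(M)$ is the set of matrices with the same entrywise sign pattern as $M$, and $\mathcal{Q}_0(M)$ its closure. A square real matrix is a $P_0$-matrix if all principal minors are nonnegative; it is positive semistable if all its eigenvalues have nonnegative real part. For $M\in\mathbb{R}^{n\times n}$, $M^{[2]}$ is the second additive compound: the matrix of $u\wedge v\mapsto Mu\wedge v+u\wedge Mv$ on $\Lambda^2\mathbb{R}^n$ in the lexicographically ordered basis $e_i\wedge e_j$, $i<j$. DSR graphs: for $A\in\mathbb{R}^{n\times m}$, $B\in\mathbb{R}^{m\times n}$, $G_{A,B}$ is the signed, labelled bipartite digraph with S-vertices $S_1,\dots,S_n$ and R-vertices $R_1,\dots,R_m$, having an arc $R_j\to S_i$ of sign $\mathrm{sign}(A_{ij})$ iff $A_{ij}\ne0$, and an arc $S_i\to R_j$ of sign $\mathrm{sign}(B_{ji})$ iff $B_{ji}\ne0$. Antiparallel arcs between the same pair of vertices with the same sign are regarded as a single undirected edge. An edge arising from $A_{ij}\ne0$ (R-to-S or undirected) has label $|A_{ij}|$; an edge with only S-to-R orientation has label $\infty$.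 A cycle is a nonempty closed walk (traversing edges consistently with their orientations) repeating no vertex except first$=$last. A cycle $(e_1,\dots,e_{2r})$ is an s-cycle if all labels are finite and $\prod_{i=1}^r l(e_{2i-1})=\prod_{i=1}^r l(e_{2i})$. A DSR graph is steady if all of its cycles are s-cycles. *)

theory Defs
  imports Complex_Main "Jordan_Normal_Form.Jordan_Normal_Form" "Jordan_Normal_Form.DL_Submatrix"
begin

definition Q0 :: "real mat \<Rightarrow> real mat set" where
  "Q0 M = {B. B \<in> carrier_mat (dim_row M) (dim_col M) \<and>
     (\<forall>i<dim_row M. \<forall>j<dim_col M. B $$ (i,j) = 0 \<or> sgn (B $$ (i,j)) = sgn (M $$ (i,j)))}"

definition P0_matrix :: "real mat \<Rightarrow> bool" where
  "P0_matrix M \<longleftrightarrow> square_mat M \<and>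
     (\<forall>I. I \<subseteq> {0..<dim_row M} \<and> I \<noteq> {} \<longrightarrow> det (submatrix M I I) \<ge> 0)"

definition positive_semistable :: "real mat \<Rightarrow> bool" where
  "positive_semistable M \<longleftrightarrow> square_mat M \<and>
     (\<forall>z. eigenvalue (map_mat complex_of_real M) z \<longrightarrow> Re z \<ge> 0)"

text \<open>Lexicographically ordered index pairs (i,j), i<j<n, of the basis e_i \<and> e_j.\<close>
definition wedge_pairs :: "nat \<Rightarrow> (nat \<times> nat) list" where
  "wedge_pairs n = concat (map (\<lambda>i. map (\<lambda>j. (i,j)) [Suc i..<n]) [0..<n])"

text \<open>Coefficient of e_i \<and> e_j in M e_k \<and> e_l + e_k \<and> M e_l (i<j, k<l).\<close>
definition compound2_entry :: "real mat \<Rightarrow> nat \<times> nat \<Rightarrow> nat \<times> nat \<Rightarrow> real" where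
  "compound2_entry M ij kl = (case ij of (i,j) \<Rightarrow> case kl of (k,l) \<Rightarrow>
      (if l = j then M $$ (i,k) else 0) - (if l = i then M $$ (j,k) else 0)
    + (if k = i then M $$ (j,l) else 0) - (if k = j then M $$ (i,l) else 0))"

definition compound2 :: "real mat \<Rightarrow> real mat" where
  "compound2 M = (let ps = wedge_pairs (dim_row M) in
     mat (length ps) (length ps) (\<lambda>(a,b). compound2_entry M (ps ! a) (ps ! b)))"

datatype dsr_vertex = SV nat | RV nat

text \<open>Edges between S_i and R_j: undirected (antiparallel arcs of equal sign),
  arc R_j -> S_i, or arc S_i -> R_j.\<close>
datatype dsr_edge = Und nat nat | RS nat nat | SR nat nat

definition dsr_edges :: "real mat \<Rightarrow> real mat \<Rightarrow> dsr_edge set" where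
  "dsr_edges A B =
     {Und i j | i j. i < dim_row A \<and> j < dim_col A \<and> A $$ (i,j) \<noteq> 0 \<and> B $$ (j,i) \<noteq> 0
                     \<and> sgn (A $$ (i,j)) = sgn (B $$ (j,i))}
   \<union> {RS i j | i j. i < dim_row A \<and> j < dim_col A \<and> A $$ (i,j) \<noteq> 0
                     \<and> \<not> (B $$ (j,i) \<noteq> 0 \<and> sgn (A $$ (i,j)) = sgn (B $$ (j,i)))}
   \<union> {SR i j | i j. i < dim_row A \<and> j < dim_col A \<and> B $$ (j,i) \<noteq> 0
                     \<and> \<not> (A $$ (i,j) \<noteq> 0 \<and> sgn (A $$ (i,j)) = sgn (B $$ (j,i)))}"

definition dsr_sign :: "real mat \<Rightarrow> real mat \<Rightarrow> dsr_edge \<Rightarrow> real" where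
  "dsr_sign A B e = (case e of Und i j \<Rightarrow> sgn (A $$ (i,j)) | RS i j \<Rightarrow> sgn (A $$ (i,j))
                      | SR i j \<Rightarrow> sgn (B $$ (j,i)))"

text \<open>Labels: None stands for the label \<infinity>.\<close>
definition dsr_label :: "real mat \<Rightarrow> dsr_edge \<Rightarrow> real option" where
  "dsr_label A e = (case e of Und i j \<Rightarrow> Some \<bar>A $$ (i,j)\<bar> | RS i j \<Rightarrow> Some \<bar>A $$ (i,j)\<bar>
                      | SR i j \<Rightarrow> None)"

definition traverses :: "dsr_edge \<Rightarrow> dsr_vertex \<Rightarrow> dsr_vertex \<Rightarrow> bool" where
  "traverses e u v = (case e of
      Und i j \<Rightarrow> (u = SV i \<and> v = RV j) \<or> (u = RV j \<and> v = SV i)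
    | RS i j \<Rightarrow> u = RV j \<and> v = SV i
    | SR i j \<Rightarrow> u = SV i \<and> v = RV j)"

definition dsr_cycle :: "real mat \<Rightarrow> real mat \<Rightarrow> dsr_vertex list \<Rightarrow> dsr_edge list \<Rightarrow> bool" where
  "dsr_cycle A B vs es \<longleftrightarrow> length es = length vs \<and> vs \<noteq> [] \<and> distinct vs \<and> distinct es \<and>
     set es \<subseteq> dsr_edges A B \<and>
     (\<forall>k < length es. traverses (es ! k) (vs ! k) (vs ! (Suc k mod length vs)))"

text \<open>s-cycle: all labels finite and product of labels of e_1,e_3,... (0-based even
  positions) equals product of labels of e_2,e_4,... (0-based odd positions).\<close>
definition s_cycle :: "real mat \<Rightarrow> dsr_edge list \<Rightarrow> bool" where
  "s_cycle A es \<longleftrightarrow> (\<forall>e \<in> set es. dsr_label A e \<noteq> None) \<and>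
     (\<Prod>k \<in> {k. k < length es \<and> even k}. the (dsr_label A (es ! k)))
   = (\<Prod>k \<in> {k. k < length es \<and> odd k}. the (dsr_label A (es ! k)))"

definition steady :: "real mat \<Rightarrow> real mat \<Rightarrow> bool" where
  "steady A B \<longleftrightarrow> (\<forall>vs es. dsr_cycle A B vs es \<longrightarrow> s_cycle A es)"

end

theory Submission
  imports Defs
begin

definition rdd :: "real mat \<Rightarrow> nat \<Rightarrow> (nat \<Rightarrow> real) \<Rightarrow> bool" where
  "rdd R n w \<longleftrightarrow> R \<in> carrier_mat n n \<and> (\<forall>i<n. w i > 0) \<and>
     (\<forall>i<n. (\<Sum>k\<in>{0..<n}-{i}. w k * \<bar>R$$(i,k)\<bar>) \<le> w i * R$$(i,i))"

lemma rdd_diag_nonneg: assumes "rdd R n w" "i < n" shows "R$$(i,i) \<ge> 0"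
proof -
  have "0 \<le> (\<Sum>k\<in>{0..<n}-{i}. w k * \<bar>R$$(i,k)\<bar>)"
    using assms unfolding rdd_def by (intro sum_nonneg) (auto intro: mult_nonneg_nonneg less_imp_le)
  also have "\<dots> \<le> w i * R$$(i,i)" using assms unfolding rdd_def by auto
  finally have "0 \<le> w i * R$$(i,i)" .
  moreover have "w i > 0" using assms unfolding rdd_def by auto
  ultimately show ?thesis by (simp add: zero_le_mult_iff)
qed

lemma gersh:
  fixes z :: "'a::real_normed_field"
  assumes r: "rdd R n w" and ev: "eigenvalue (map_mat of_real R) z"
  shows "\<exists>i<n. norm (z - of_real (R$$(i,i))) \<le> R$$(i,i)"
proof -
  have R: "R \<in> carrier_mat n n" and wp: "\<And>i. i<n \<Longrightarrow> w i > 0"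
    and dd: "\<And>i. i<n \<Longrightarrow> (\<Sum>k\<in>{0..<n}-{i}. w k * \<bar>R$$(i,k)\<bar>) \<le> w i * R$$(i,i)"
    using r unfolding rdd_def by auto
  from ev obtain v where v: "v \<in> carrier_vec n" "v \<noteq> 0\<^sub>v n"
    and eq: "map_mat of_real R *\<^sub>v v = z \<cdot>\<^sub>v v"
    using R unfolding eigenvalue_def eigenvector_def by auto
  define f where "f k = norm (v$k) / w k" for k
  have n0: "{0..<n} \<noteq> {}"
  proof
    assume "{0..<n} = {}" then have "n = 0" by simp
    with v show False by auto
  qed
  obtain i where i: "i \<in> {0..<n}" "f i = Max (f ` {0..<n})"
    by (metis (no_types) Max_in finite_atLeastLessThan finite_imageI image_iff image_is_empty n0)
  have fmax: "\<And>k. k < n \<Longrightarrow> f k \<le> f i" using i by auto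
  have in_: "i < n" using i by auto
  have vi: "v$i \<noteq> 0"
  proof
    assume "v$i = 0"
    then have "f i = 0" by (simp add: f_def)
    have "\<And>k. k<n \<Longrightarrow> v$k = 0"
    proof -
      fix k assume k: "k<n"
      have "f k \<le> 0" using fmax[OF k] \<open>f i = 0\<close> by simp
      moreover have "f k \<ge> 0" using wp[OF k] by (simp add: f_def)
      ultimately have "norm (v$k) / w k = 0" by (simp add: f_def)
      then show "v$k = 0" using wp[OF k] by simp
    qed
    then have "v = 0\<^sub>v n" using v(1) by (intro eq_vecI) auto
    with v(2) show False by simp
  qed
  have row: "(\<Sum>k\<in>{0..<n}. of_real (R$$(i,k)) * v$k) = z * v$i"
  proof -
    have "(map_mat of_real R *\<^sub>v v) $ i = (z \<cdot>\<^sub>v v) $ i" using eq by simp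
    then show ?thesis using R v(1) in_
      by (simp add: mult_mat_vec_def scalar_prod_def)
  qed
  have "(z - of_real (R$$(i,i))) * v$i = (\<Sum>k\<in>{0..<n}-{i}. of_real (R$$(i,k)) * v$k)"
  proof -
    have "(\<Sum>k\<in>{0..<n}. of_real (R$$(i,k)) * v$k) = of_real (R$$(i,i)) * v$i + (\<Sum>k\<in>{0..<n}-{i}. of_real (R$$(i,k)) * v$k)"
      using in_ by (subst sum.remove[of _ i]) auto
    with row show ?thesis by (simp add: algebra_simps)
  qed
  then have "norm (z - of_real (R$$(i,i))) * norm (v$i) = norm (\<Sum>k\<in>{0..<n}-{i}. of_real (R$$(i,k)) * v$k)"
    by (metis norm_mult)
  also have "\<dots> \<le> (\<Sum>k\<in>{0..<n}-{i}. \<bar>R$$(i,k)\<bar> * norm (v$k))"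
    by (rule order_trans[OF norm_sum]) (simp add: norm_mult)
  also have "\<dots> \<le> (\<Sum>k\<in>{0..<n}-{i}. w k * \<bar>R$$(i,k)\<bar> * f i)"
  proof (rule sum_mono)
    fix k assume "k \<in> {0..<n}-{i}"
    then have k: "k<n" by auto
    have "norm (v$k) = w k * f k" using wp[OF k] by (simp add: f_def)
    also have "\<dots> \<le> w k * f i" using fmax[OF k] wp[OF k] by simp
    finally show "\<bar>R$$(i,k)\<bar> * norm (v$k) \<le> w k * \<bar>R$$(i,k)\<bar> * f i"
      by (metis abs_ge_zero mult.assoc mult.commute mult_left_mono)
  qed
  also have "\<dots> = (\<Sum>k\<in>{0..<n}-{i}. w k * \<bar>R$$(i,k)\<bar>) * f i" by (simp add: sum_distrib_right)
  also have "\<dots> \<le> w i * R$$(i,i) * f i"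
    using dd[OF in_] by (rule mult_right_mono) (simp add: f_def wp[OF in_] less_imp_le)
  also have "\<dots> = R$$(i,i) * norm (v$i)" using wp[OF in_] by (simp add: f_def)
  finally have "norm (z - of_real (R$$(i,i))) * norm (v$i) \<le> R$$(i,i) * norm (v$i)" .
  then have "norm (z - of_real (R$$(i,i))) \<le> R$$(i,i)" using vi by simp
  with in_ show ?thesis by blast
qed

lemma rdd_det_nonneg: assumes r: "rdd R n w" shows "det R \<ge> 0"
proof (rule ccontr)
  assume neg: "\<not> det R \<ge> 0"
  have R: "R \<in> carrier_mat n n" using r unfolding rdd_def by auto
  have mR: "-R \<in> carrier_mat n n" using R by simp
  define q where "q = char_poly (-R)"
  have polyq: "poly q t = det (- char_matrix (-R) t)" for t
    unfolding q_def by (rule char_poly_matrix[OF mR])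
  have q0: "poly q 0 = det R"
  proof -
    have "- char_matrix (-R) 0 = R" using R unfolding char_matrix_def
      by (intro eq_matI) auto
    then show ?thesis using polyq by simp
  qed
  have "lead_coeff q = 1" using degree_monic_char_poly[OF mR] unfolding q_def by simp
  then obtain N where N: "\<forall>x\<ge>N. poly q x \<ge> 1" using poly_pinfty_gt_lc[of q] by auto
  define b where "b = max N 1"
  have "poly q b \<ge> 1" using N unfolding b_def by auto
  moreover have "0 < b" unfolding b_def by auto
  ultimately have "\<exists>x. 0 < x \<and> x < b \<and> poly q x = 0"
    using q0 neg by (intro poly_IVT_pos) auto
  then obtain t where t: "0 < t" "t < b" "poly q t = 0" by blast
  have "eigenvalue (-R) t" using eigenvalue_root_char_poly[OF mR] t(3) unfolding q_def by simp
  then obtain v where v: "v \<in> carrier_vec n" "v \<noteq> 0\<^sub>v n" "(-R) *\<^sub>v v = t \<cdot>\<^sub>v v"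
    using mR unfolding eigenvalue_def eigenvector_def by auto
  have "R *\<^sub>v v = (-t) \<cdot>\<^sub>v v"
  proof -
    have "(-R) *\<^sub>v v = - (R *\<^sub>v v)" using R v(1) by (simp add: uminus_mult_mat_vec)
    with v(3) have "R *\<^sub>v v = - (t \<cdot>\<^sub>v v)"
      by (metis uminus_uminus_vec)
    then show ?thesis by auto
  qed
  moreover have "map_mat (of_real :: real \<Rightarrow> real) R = R" by (intro eq_matI) auto
  ultimately have "eigenvalue (map_mat (of_real :: real \<Rightarrow> real) R) (-t)"
    using v R unfolding eigenvalue_def eigenvector_def by auto
  from gersh[OF r this] obtain i where i: "i<n" "norm (-t - of_real (R$$(i,i))) \<le> R$$(i,i)" by blast
  have "R$$(i,i) \<ge> 0" using rdd_diag_nonneg[OF r i(1)] .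
  with i(2) t(1) show False by simp
qed

lemma card_I: "I \<subseteq> {0..<n} \<Longrightarrow> card {i. i < n \<and> i \<in> I} = card I"
proof -
  assume "I \<subseteq> {0..<n}"
  then have "{i. i < n \<and> i \<in> I} = I" by auto
  then show ?thesis by simp
qed

lemma pick_props:
  assumes I: "I \<subseteq> {0..<n}" and a: "a < card I"
  shows "pick I a < n" "pick I a \<in> I"
proof -
  have "a < card {i. i < n \<and> i \<in> I}" using card_I[OF I] a by simp
  then show "pick I a < n" by (rule pick_le)
  show "pick I a \<in> I" using a by (rule pick_in_set[OF disjI1])
qed

lemma pick_inj: assumes "I \<subseteq> {0..<n}" shows "inj_on (pick I) {0..<card I}"
proof (rule inj_onI)
  fix a b assume ab: "a \<in> {0..<card I}" "b \<in> {0..<card I}" "pick I a = pick I b"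
  show "a = b"
  proof (rule ccontr)
    assume "a \<noteq> b"
    then have "a < b \<or> b < a" by auto
    then show False using ab pick_mono[of b I a] pick_mono[of a I b] by auto
  qed
qed

lemma rdd_submatrix:
  assumes r: "rdd R n w" and I: "I \<subseteq> {0..<n}"
  shows "rdd (submatrix R I I) (card I) (w \<circ> pick I)"
proof -
  have R: "R \<in> carrier_mat n n" and wp: "\<And>i. i<n \<Longrightarrow> w i > 0"
    and dd: "\<And>i. i<n \<Longrightarrow> (\<Sum>k\<in>{0..<n}-{i}. w k * \<bar>R$$(i,k)\<bar>) \<le> w i * R$$(i,i)"
    using r unfolding rdd_def by auto
  let ?c = "card I"
  have cI: "card {i. i < dim_row R \<and> i \<in> I} = ?c" "card {i. i < dim_col R \<and> i \<in> I} = ?c"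
  proof -
    have "dim_row R = n" "dim_col R = n" using R by auto
    then show "card {i. i < dim_row R \<and> i \<in> I} = ?c" "card {i. i < dim_col R \<and> i \<in> I} = ?c"
      by (simp_all only: card_I[OF I])
  qed
  have S: "submatrix R I I \<in> carrier_mat ?c ?c" 
    by (rule carrier_matI) (simp_all only: dim_submatrix cI)
  have Sidx: "submatrix R I I $$ (a,b) = R $$ (pick I a, pick I b)" if "a < ?c" "b < ?c" for a b
    by (rule submatrix_index) (simp_all only: cI that)
  show ?thesis unfolding rdd_def
  proof (intro conjI allI impI S)
    fix a assume a: "a < ?c"
    have "pick I a < n" by (rule pick_props(1)[OF I a])
    then show "(w \<circ> pick I) a > 0" using wp by simp
  next
    fix b assume b: "b < ?c"
    have pb: "pick I b < n" by (rule pick_props(1)[OF I b])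
    have "(\<Sum>a\<in>{0..<?c}-{b}. (w \<circ> pick I) a * \<bar>submatrix R I I $$ (b,a)\<bar>)
        = (\<Sum>a\<in>{0..<?c}-{b}. w (pick I a) * \<bar>R $$ (pick I b, pick I a)\<bar>)"
      using Sidx b by (intro sum.cong) auto
    also have "\<dots> = (\<Sum>k\<in>pick I ` ({0..<?c}-{b}). w k * \<bar>R $$ (pick I b, k)\<bar>)"
    proof -
      have "inj_on (pick I) ({0..<?c}-{b})" by (rule inj_on_subset[OF pick_inj[OF I]]) blast
      then show ?thesis by (simp add: sum.reindex)
    qed
    also have "\<dots> \<le> (\<Sum>k\<in>{0..<n}-{pick I b}. w k * \<bar>R $$ (pick I b, k)\<bar>)"
    proof (rule sum_mono2)
      show "pick I ` ({0..<?c}-{b}) \<subseteq> {0..<n}-{pick I b}"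
      proof
        fix k assume "k \<in> pick I ` ({0..<?c}-{b})"
        then obtain a where a0: "a \<in> {0..<?c}-{b}" "k = pick I a" by blast
        then have a: "a < ?c" "a \<noteq> b" "k = pick I a" by auto
        have "pick I a \<noteq> pick I b"
        proof
          assume "pick I a = pick I b"
          then have "a = b" using inj_onD[OF pick_inj[OF I]] a(1) b by simp
          with a(2) show False ..
        qed
        then show "k \<in> {0..<n}-{pick I b}" using a pick_props[OF I a(1)] by auto
      qed
      show "\<And>k. k \<in> {0..<n}-{pick I b} - pick I ` ({0..<?c}-{b}) \<Longrightarrow> 0 \<le> w k * \<bar>R $$ (pick I b, k)\<bar>"
        using wp by (simp add: less_imp_le)
    qed simp
    also have "\<dots> \<le> w (pick I b) * R $$ (pick I b, pick I b)" using dd[OF pb] .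
    also have "\<dots> = (w \<circ> pick I) b * submatrix R I I $$ (b,b)" using Sidx b by simp
    finally show "(\<Sum>a\<in>{0..<?c}-{b}. (w \<circ> pick I) a * \<bar>submatrix R I I $$ (b,a)\<bar>) \<le> (w \<circ> pick I) b * submatrix R I I $$ (b,b)" .
  qed
qed

lemma transpose_submatrix:
  assumes M: "M \<in> carrier_mat n n"
  shows "transpose_mat (submatrix M I I) = submatrix (transpose_mat M) I I"
proof -
  let ?c = "card {i. i < n \<and> i \<in> I}"
  have d1: "dim_row (submatrix M I I) = ?c" "dim_col (submatrix M I I) = ?c"
    using M by (simp_all only: dim_submatrix carrier_matD)
  have d2: "dim_row (submatrix (transpose_mat M) I I) = ?c" "dim_col (submatrix (transpose_mat M) I I) = ?c"
    using M by (simp_all only: dim_submatrix carrier_matD index_transpose_mat)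
  show ?thesis
  proof (rule eq_matI)
    show "dim_row (transpose_mat (submatrix M I I)) = dim_row (submatrix (transpose_mat M) I I)"
      by (simp only: index_transpose_mat d1 d2)
    show "dim_col (transpose_mat (submatrix M I I)) = dim_col (submatrix (transpose_mat M) I I)"
      by (simp only: index_transpose_mat d1 d2)
    fix i j assume ij: "i < dim_row (submatrix (transpose_mat M) I I)" "j < dim_col (submatrix (transpose_mat M) I I)"
    then have i: "i < ?c" and j: "j < ?c" by (simp_all only: d2)
    have "transpose_mat (submatrix M I I) $$ (i,j) = submatrix M I I $$ (j,i)"
      using i j by (intro index_transpose_mat(1)) (simp_all only: d1)
    also have "\<dots> = M $$ (pick I j, pick I i)"
      using i j M by (intro submatrix_index) (simp_all only: carrier_matD)
    also have "\<dots> = transpose_mat M $$ (pick I i, pick I j)"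
    proof -
      have "pick I i < n" "pick I j < n" using i j pick_le by blast+
      then show ?thesis using M by simp
    qed
    also have "\<dots> = submatrix (transpose_mat M) I I $$ (i,j)"
      using i j M by (intro submatrix_index[symmetric]) (simp_all only: carrier_matD index_transpose_mat)
    finally show "transpose_mat (submatrix M I I) $$ (i,j) = submatrix (transpose_mat M) I I $$ (i,j)" .
  qed
qed

lemma rdd_P0: assumes r: "rdd (transpose_mat M) n w" "M \<in> carrier_mat n n"
  shows "P0_matrix M"
  unfolding P0_matrix_def
proof (intro conjI allI impI)
  show "square_mat M" using r(2) by simp
  fix I assume I: "I \<subseteq> {0..<dim_row M} \<and> I \<noteq> {}"
  have dr: "dim_row M = n" using r(2) by simp
  then have I': "I \<subseteq> {0..<n}" using I by simp
  have sq: "submatrix M I I \<in> carrier_mat (card I) (card I)"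
  proof (rule carrier_matI)
    show "dim_row (submatrix M I I) = card I" "dim_col (submatrix M I I) = card I"
      using r(2) by (simp_all only: dim_submatrix carrier_matD card_I[OF I'])
  qed
  have "det (submatrix M I I) = det (transpose_mat (submatrix M I I))" using det_transpose[OF sq] by simp
  also have "\<dots> = det (submatrix (transpose_mat M) I I)" by (simp only: transpose_submatrix[OF r(2)])
  finally have e: "det (submatrix M I I) = det (submatrix (transpose_mat M) I I)" .
  have "det (submatrix (transpose_mat M) I I) \<ge> 0" by (rule rdd_det_nonneg[OF rdd_submatrix[OF r(1) I']])
  with e show "det (submatrix M I I) \<ge> 0" by simp
qed

lemma eigenvalue_transpose_complex:
  assumes M: "M \<in> carrier_mat n n" and ev: "eigenvalue (map_mat complex_of_real M) z"
  shows "eigenvalue (map_mat complex_of_real (transpose_mat M)) z"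
proof -
  have Mc: "map_mat complex_of_real M \<in> carrier_mat n n" using M by simp
  have "poly (char_poly (map_mat complex_of_real M)) z = 0"
    using eigenvalue_root_char_poly[OF Mc] ev by simp
  then have "poly (char_poly (transpose_mat (map_mat complex_of_real M))) z = 0"
    using char_poly_transpose_mat[OF Mc] by simp
  moreover have "transpose_mat (map_mat complex_of_real M) = map_mat complex_of_real (transpose_mat M)"
    by (intro eq_matI) auto
  moreover have "map_mat complex_of_real (transpose_mat M) \<in> carrier_mat n n" using M by simp
  ultimately show ?thesis using eigenvalue_root_char_poly by metis
qed

lemma rdd_eig_re: assumes r: "rdd R n w" and ev: "eigenvalue (map_mat complex_of_real R) z"
  shows "Re z \<ge> 0"
proof -
  from gersh[OF r ev] obtain i where i: "i<n" "cmod (z - of_real (R $$ (i,i))) \<le> R $$ (i,i)"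
    by blast
  have "\<bar>Re z - R $$ (i,i)\<bar> \<le> cmod (z - of_real (R $$ (i,i)))"
    by (metis Re_complex_of_real abs_Re_le_cmod minus_complex.simps(1))
  with i show "Re z \<ge> 0" by linarith
qed

lemma rdd_semistable: assumes r: "rdd (transpose_mat M) n w" "M \<in> carrier_mat n n"
  shows "positive_semistable M"
  unfolding positive_semistable_def
proof (intro conjI allI impI)
  show "square_mat M" using r(2) by simp
  fix z assume "eigenvalue (map_mat complex_of_real M) z"
  from eigenvalue_transpose_complex[OF r(2) this] show "Re z \<ge> 0" by (rule rdd_eig_re[OF r(1)])
qed

lemma mult_entry: assumes "A \<in> carrier_mat n m" "B \<in> carrier_mat m p" "i < n" "k < p"
  shows "(A * B) $$ (i,k) = (\<Sum>j\<in>{0..<m}. A $$ (i,j) * B $$ (j,k))"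
  using assms by (simp add: scalar_prod_def)

lemma col_bound:
  fixes w :: "nat \<Rightarrow> real"
  assumes A: "A \<in> carrier_mat n m" and j: "j < m" and k: "k < n"
    and card2: "card {i. i < n \<and> A $$ (i,j) \<noteq> 0} \<le> 2"
    and wc: "\<forall>i<n. \<forall>k<n. i \<noteq> k \<longrightarrow> A$$(i,j) \<noteq> 0 \<longrightarrow> A$$(k,j) \<noteq> 0 \<longrightarrow> w i * \<bar>A$$(i,j)\<bar> = w k * \<bar>A$$(k,j)\<bar>"
    and Akj: "A $$ (k,j) \<noteq> 0" and wk: "w k > 0"
  shows "(\<Sum>i\<in>{0..<n}-{k}. w i * \<bar>A$$(i,j)\<bar>) \<le> w k * \<bar>A$$(k,j)\<bar>"
proof -
  define S where "S = {i\<in>{0..<n}-{k}. A$$(i,j) \<noteq> 0}"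
  have "(\<Sum>i\<in>{0..<n}-{k}. w i * \<bar>A$$(i,j)\<bar>) = (\<Sum>i\<in>S. w i * \<bar>A$$(i,j)\<bar>)"
    unfolding S_def by (rule sum.mono_neutral_right) auto
  also have "\<dots> = (\<Sum>i\<in>S. w k * \<bar>A$$(k,j)\<bar>)"
    using wc Akj k unfolding S_def by (intro sum.cong) auto
  also have "\<dots> = of_nat (card S) * (w k * \<bar>A$$(k,j)\<bar>)" by simp
  also have "\<dots> \<le> w k * \<bar>A$$(k,j)\<bar>"
  proof -
    have fin: "finite S" unfolding S_def by auto
    have "insert k S \<subseteq> {i. i < n \<and> A $$ (i,j) \<noteq> 0}" using k Akj unfolding S_def by auto
    moreover have "finite {i. i < n \<and> A $$ (i,j) \<noteq> 0}" by simp
    ultimately have "card (insert k S) \<le> card {i. i < n \<and> A $$ (i,j) \<noteq> 0}" by (rule card_mono[rotated])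
    then have "card (insert k S) \<le> 2" using card2 by (rule order_trans)
    moreover have "k \<notin> S" unfolding S_def by auto
    moreover have "card (insert k S) = Suc (card S)" using fin \<open>k \<notin> S\<close> by simp
    ultimately have "card S \<le> 1" by linarith
    then have "real (card S) \<le> 1" by simp
    moreover have "w k * \<bar>A$$(k,j)\<bar> \<ge> 0" using wk by simp
    ultimately show ?thesis by (metis mult_left_le_one_le mult.commute of_nat_0_le_iff)
  qed
  finally show ?thesis .
qed

lemma sgn_prod: "sgn (x::real) = sgn y \<Longrightarrow> x * y = \<bar>x\<bar> * \<bar>y\<bar>"
proof -
  assume s: "sgn x = sgn y"
  have "x * y \<ge> 0" using s by (auto simp: zero_le_mult_iff sgn_if split: if_splits)
  then show ?thesis by (simp add: abs_mult[symmetric])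
qed

lemma AB_rdd:
  fixes w :: "nat \<Rightarrow> real"
  assumes A: "A \<in> carrier_mat n m" and B: "B \<in> Q0 (transpose_mat A)"
    and cols: "\<forall>j<m. card {i. i < n \<and> A $$ (i,j) \<noteq> 0} \<le> 2"
    and wp: "\<forall>i<n. w i > 0"
    and wc: "\<forall>j<m. \<forall>i<n. \<forall>k<n. i \<noteq> k \<longrightarrow> A$$(i,j) \<noteq> 0 \<longrightarrow> A$$(k,j) \<noteq> 0 \<longrightarrow> w i * \<bar>A$$(i,j)\<bar> = w k * \<bar>A$$(k,j)\<bar>"
  shows "rdd (transpose_mat (A * B)) n w"
proof -
  have Bc: "B \<in> carrier_mat m n" using B A unfolding Q0_def by auto
  have Bs: "B $$ (j,k) = 0 \<or> sgn (B $$ (j,k)) = sgn (A $$ (k,j))" if "j < m" "k < n" for j k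
    using B A that unfolding Q0_def by auto
  have prod: "A $$ (k,j) * B $$ (j,k) = \<bar>A $$ (k,j)\<bar> * \<bar>B $$ (j,k)\<bar>" if "j < m" "k < n" for j k
    using Bs[OF that] sgn_prod[of "A $$ (k,j)" "B $$ (j,k)"] by auto
  have colterm: "(\<Sum>i\<in>{0..<n}-{k}. w i * \<bar>A$$(i,j)\<bar>) * \<bar>B$$(j,k)\<bar> \<le> w k * (A$$(k,j) * B$$(j,k))"
    if j: "j < m" and k: "k < n" for j k
  proof (cases "B $$ (j,k) = 0")
    case True then show ?thesis by simp
  next
    case False
    then have "sgn (B $$ (j,k)) = sgn (A $$ (k,j))" using Bs[OF j k] by simp
    then have Akj: "A $$ (k,j) \<noteq> 0" using False by (auto simp: sgn_0_0)
    have "(\<Sum>i\<in>{0..<n}-{k}. w i * \<bar>A$$(i,j)\<bar>) \<le> w k * \<bar>A$$(k,j)\<bar>"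
    proof (rule col_bound[OF A j k])
      show "card {i. i < n \<and> A $$ (i,j) \<noteq> 0} \<le> 2" using cols j by blast
      show "\<forall>i<n. \<forall>k<n. i \<noteq> k \<longrightarrow> A$$(i,j) \<noteq> 0 \<longrightarrow> A$$(k,j) \<noteq> 0 \<longrightarrow> w i * \<bar>A$$(i,j)\<bar> = w k * \<bar>A$$(k,j)\<bar>"
        using wc j by blast
      show "A $$ (k,j) \<noteq> 0" by (rule Akj)
      show "w k > 0" using wp k by blast
    qed
    then have "(\<Sum>i\<in>{0..<n}-{k}. w i * \<bar>A$$(i,j)\<bar>) * \<bar>B$$(j,k)\<bar> \<le> w k * \<bar>A$$(k,j)\<bar> * \<bar>B$$(j,k)\<bar>"
      by (rule mult_right_mono) simp
    then show ?thesis using prod[OF j k] by (simp add: mult.assoc)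
  qed
  have M: "A * B \<in> carrier_mat n n" using A Bc by simp
  have Mt: "transpose_mat (A * B) \<in> carrier_mat n n" using M by simp
  show ?thesis unfolding rdd_def
  proof (intro conjI allI impI Mt)
    fix i assume "i < n" then show "w i > 0" using wp by simp
  next
    fix k assume k: "k < n"
    have "(\<Sum>i\<in>{0..<n}-{k}. w i * \<bar>transpose_mat (A * B) $$ (k,i)\<bar>)
        = (\<Sum>i\<in>{0..<n}-{k}. w i * \<bar>\<Sum>j\<in>{0..<m}. A $$ (i,j) * B $$ (j,k)\<bar>)"
    proof (rule sum.cong[OF refl])
      fix i assume "i \<in> {0..<n}-{k}"
      then have i: "i < n" by simp
      have "transpose_mat (A * B) $$ (k,i) = (A * B) $$ (i,k)" using M i k by (intro index_transpose_mat(1)) auto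
      also have "\<dots> = (\<Sum>j\<in>{0..<m}. A $$ (i,j) * B $$ (j,k))" by (rule mult_entry[OF A Bc i k])
      finally show "w i * \<bar>transpose_mat (A * B) $$ (k,i)\<bar> = w i * \<bar>\<Sum>j\<in>{0..<m}. A $$ (i,j) * B $$ (j,k)\<bar>" by simp
    qed
    also have "\<dots> \<le> (\<Sum>i\<in>{0..<n}-{k}. \<Sum>j\<in>{0..<m}. w i * \<bar>A $$ (i,j)\<bar> * \<bar>B $$ (j,k)\<bar>)"
    proof (rule sum_mono)
      fix i assume "i \<in> {0..<n}-{k}"
      then have wi: "w i > 0" using wp by simp
      have "\<bar>\<Sum>j\<in>{0..<m}. A $$ (i,j) * B $$ (j,k)\<bar> \<le> (\<Sum>j\<in>{0..<m}. \<bar>A $$ (i,j)\<bar> * \<bar>B $$ (j,k)\<bar>)"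
        by (rule order_trans[OF sum_abs]) (simp add: abs_mult)
      then have "w i * \<bar>\<Sum>j\<in>{0..<m}. A $$ (i,j) * B $$ (j,k)\<bar> \<le> w i * (\<Sum>j\<in>{0..<m}. \<bar>A $$ (i,j)\<bar> * \<bar>B $$ (j,k)\<bar>)"
        using wi by (intro mult_left_mono) auto
      then show "w i * \<bar>\<Sum>j\<in>{0..<m}. A $$ (i,j) * B $$ (j,k)\<bar> \<le> (\<Sum>j\<in>{0..<m}. w i * \<bar>A $$ (i,j)\<bar> * \<bar>B $$ (j,k)\<bar>)"
        by (simp add: sum_distrib_left mult.assoc)
    qed
    also have "\<dots> = (\<Sum>j\<in>{0..<m}. (\<Sum>i\<in>{0..<n}-{k}. w i * \<bar>A $$ (i,j)\<bar>) * \<bar>B $$ (j,k)\<bar>)"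
      by (subst sum.swap) (simp add: sum_distrib_right)
    also have "\<dots> \<le> (\<Sum>j\<in>{0..<m}. w k * (A $$ (k,j) * B $$ (j,k)))"
      by (rule sum_mono) (use colterm k in auto)
    also have "\<dots> = w k * (A * B) $$ (k,k)"
      by (simp add: mult_entry[OF A Bc k k] sum_distrib_left)
    also have "\<dots> = w k * transpose_mat (A * B) $$ (k,k)" using M k by (subst index_transpose_mat(1)) auto
    finally show "(\<Sum>i\<in>{0..<n}-{k}. w i * \<bar>transpose_mat (A * B) $$ (k,i)\<bar>) \<le> w k * transpose_mat (A * B) $$ (k,k)" .
  qed
qed

lemma set_wedge: "set (wedge_pairs n) = {(i,j). i < j \<and> j < n}"
  unfolding wedge_pairs_def by fastforce

lemma distinct_concat_pairs:
  "distinct xs \<Longrightarrow> (\<And>i. distinct (h i)) \<Longrightarrow> distinct (concat (map (\<lambda>i. map (Pair i) (h i)) xs))"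
  by (induction xs) (auto simp: distinct_map inj_on_def)

lemma distinct_wedge: "distinct (wedge_pairs n)"
  unfolding wedge_pairs_def by (rule distinct_concat_pairs) auto

lemma sum_snd_filter:
  assumes "finite Q"
  shows "(\<Sum>p\<in>Q. if snd p = l then F (fst p) else 0) = (\<Sum>i\<in>{i. (i,l)\<in>Q}. F i)"
proof -
  have "(\<Sum>p\<in>Q. if snd p = l then F (fst p) else 0) = (\<Sum>p\<in>{p\<in>Q. snd p = l}. F (fst p))"
    using assms by (simp add: sum.inter_filter)
  also have "{p\<in>Q. snd p = l} = (\<lambda>i. (i,l)) ` {i. (i,l)\<in>Q}" by force
  also have "(\<Sum>p\<in>(\<lambda>i. (i,l)) ` {i. (i,l)\<in>Q}. F (fst p)) = (\<Sum>i\<in>{i. (i,l)\<in>Q}. F i)"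
    by (subst sum.reindex) (auto simp: inj_on_def)
  finally show ?thesis .
qed

lemma sum_fst_filter:
  assumes "finite Q"
  shows "(\<Sum>p\<in>Q. if fst p = l then F (snd p) else 0) = (\<Sum>j\<in>{j. (l,j)\<in>Q}. F j)"
proof -
  have "(\<Sum>p\<in>Q. if fst p = l then F (snd p) else 0) = (\<Sum>p\<in>{p\<in>Q. fst p = l}. F (snd p))"
    using assms by (simp add: sum.inter_filter)
  also have "{p\<in>Q. fst p = l} = (\<lambda>j. (l,j)) ` {j. (l,j)\<in>Q}" by force
  also have "(\<Sum>p\<in>(\<lambda>j. (l,j)) ` {j. (l,j)\<in>Q}. F (snd p)) = (\<Sum>j\<in>{j. (l,j)\<in>Q}. F j)"
    by (subst sum.reindex) (auto simp: inj_on_def)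
  finally show ?thesis .
qed

lemma abs4: "\<bar>(a::real) - b + c - d\<bar> \<le> \<bar>a\<bar> + \<bar>b\<bar> + \<bar>c\<bar> + \<bar>d\<bar>"
  by (auto simp: abs_if)

lemma entry_bound:
  "\<bar>compound2_entry M (i,j) (k,l)\<bar> \<le> \<bar>if l = j then M $$ (i,k) else 0\<bar> + \<bar>if l = i then M $$ (j,k) else 0\<bar>
     + \<bar>if k = i then M $$ (j,l) else 0\<bar> + \<bar>if k = j then M $$ (i,l) else 0\<bar>"
  unfolding compound2_entry_def prod.case by (rule abs4)

lemma pointwise_bound:
  fixes w :: "nat \<Rightarrow> real"
  assumes wi: "w i \<ge> 0" and wj: "w j \<ge> 0"
  shows "w i * w j * \<bar>compound2_entry M (i,j) (k,l)\<bar> \<le>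
      (if j = l then w i * w l * \<bar>M$$(i,k)\<bar> else 0) + (if i = l then w l * w j * \<bar>M$$(j,k)\<bar> else 0)
    + (if i = k then w k * w j * \<bar>M$$(j,l)\<bar> else 0) + (if j = k then w i * w k * \<bar>M$$(i,l)\<bar> else 0)"
proof -
  have x: "w i * w j \<ge> 0" using wi wj by simp
  have "w i * w j * \<bar>compound2_entry M (i,j) (k,l)\<bar> \<le> w i * w j * (\<bar>if l = j then M $$ (i,k) else 0\<bar> + \<bar>if l = i then M $$ (j,k) else 0\<bar>
     + \<bar>if k = i then M $$ (j,l) else 0\<bar> + \<bar>if k = j then M $$ (i,l) else 0\<bar>)"
    by (rule mult_left_mono[OF entry_bound x])
  also have "\<dots> = w i * w j * \<bar>if l = j then M $$ (i,k) else 0\<bar> + w i * w j * \<bar>if l = i then M $$ (j,k) else 0\<bar>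
     + w i * w j * \<bar>if k = i then M $$ (j,l) else 0\<bar> + w i * w j * \<bar>if k = j then M $$ (i,l) else 0\<bar>"
    by (simp add: distrib_left)
  also have "\<dots> = (if j = l then w i * w l * \<bar>M$$(i,k)\<bar> else 0) + (if i = l then w l * w j * \<bar>M$$(j,k)\<bar> else 0)
    + (if i = k then w k * w j * \<bar>M$$(j,l)\<bar> else 0) + (if j = k then w i * w k * \<bar>M$$(i,l)\<bar> else 0)"
  proof -
    have "w i * w j * \<bar>if l = j then M $$ (i,k) else 0\<bar> = (if j = l then w i * w l * \<bar>M$$(i,k)\<bar> else 0)"
      by (cases "l = j") auto
    moreover have "w i * w j * \<bar>if l = i then M $$ (j,k) else 0\<bar> = (if i = l then w l * w j * \<bar>M$$(j,k)\<bar> else 0)"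
      by (cases "l = i") auto
    moreover have "w i * w j * \<bar>if k = i then M $$ (j,l) else 0\<bar> = (if i = k then w k * w j * \<bar>M$$(j,l)\<bar> else 0)"
      by (cases "k = i") auto
    moreover have "w i * w j * \<bar>if k = j then M $$ (i,l) else 0\<bar> = (if j = k then w i * w k * \<bar>M$$(i,l)\<bar> else 0)"
      by (cases "k = j") auto
    ultimately show ?thesis by simp
  qed
  finally show ?thesis .
qed

lemma compound_rdd:
  fixes w :: "nat \<Rightarrow> real"
  assumes r: "rdd (transpose_mat M) n w" and M: "M \<in> carrier_mat n n"
  shows "rdd (transpose_mat (compound2 M)) (length (wedge_pairs n))
           (\<lambda>a. w (fst (wedge_pairs n ! a)) * w (snd (wedge_pairs n ! a)))"
proof -
  define ps where "ps = wedge_pairs n"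
  define N where "N = length ps"
  define P where "P = set ps"
  have wp: "\<And>i. i < n \<Longrightarrow> w i > 0" using r unfolding rdd_def by auto
  have cd: "(\<Sum>i\<in>{0..<n}-{k}. w i * \<bar>M$$(i,k)\<bar>) \<le> w k * M$$(k,k)" if k: "k < n" for k
  proof -
    have "(\<Sum>i\<in>{0..<n}-{k}. w i * \<bar>M$$(i,k)\<bar>) = (\<Sum>i\<in>{0..<n}-{k}. w i * \<bar>transpose_mat M $$(k,i)\<bar>)"
      using M k by (intro sum.cong refl) (subst index_transpose_mat(1), auto)
    also have "\<dots> \<le> w k * transpose_mat M $$ (k,k)" using r k unfolding rdd_def by blast
    also have "\<dots> = w k * M $$ (k,k)" using M k by (subst index_transpose_mat(1)) auto
    finally show ?thesis .
  qed
  have Cdef: "compound2 M = mat N N (\<lambda>(a,b). compound2_entry M (ps ! a) (ps ! b))"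
    unfolding compound2_def N_def ps_def Let_def using M by simp
  have C: "compound2 M \<in> carrier_mat N N" unfolding Cdef by simp
  have Ct: "transpose_mat (compound2 M) \<in> carrier_mat N N" using C by simp
  have Cidx: "transpose_mat (compound2 M) $$ (b,a) = compound2_entry M (ps ! a) (ps ! b)" if "a < N" "b < N" for a b
    using that C by (subst index_transpose_mat(1)) (auto simp: Cdef)
  have dist: "distinct ps" unfolding ps_def by (rule distinct_wedge)
  have Pset: "P = {(i,j). i < j \<and> j < n}" unfolding P_def ps_def by (rule set_wedge)
  have finP: "finite P" unfolding P_def by simp
  show ?thesis unfolding rdd_def ps_def[symmetric] N_def[symmetric]
  proof (intro conjI allI impI Ct)
    fix a assume a: "a < N"
    then have "ps ! a \<in> P" unfolding P_def N_def by simp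
    then have "fst (ps ! a) < n" "snd (ps ! a) < n" unfolding Pset by auto
    then show "w (fst (ps ! a)) * w (snd (ps ! a)) > 0" using wp by simp
  next
    fix b assume b: "b < N"
    obtain k l where kl: "ps ! b = (k,l)" by fastforce
    have "(k,l) \<in> P" using b kl unfolding P_def N_def by (metis nth_mem)
    then have k: "k < l" "l < n" unfolding Pset by auto
    define Q where "Q = P - {(k,l)}"
    have finQ: "finite Q" unfolding Q_def using finP by simp
    have wnn: "\<And>i. i < n \<Longrightarrow> w i \<ge> 0" using wp less_imp_le by blast
    define T1 where "T1 p = (if snd p = l then w (fst p) * w l * \<bar>M$$(fst p,k)\<bar> else 0)" for p :: "nat \<times> nat"
    define T2 where "T2 p = (if fst p = l then w l * w (snd p) * \<bar>M$$(snd p,k)\<bar> else 0)" for p :: "nat \<times> nat"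
    define T3 where "T3 p = (if fst p = k then w k * w (snd p) * \<bar>M$$(snd p,l)\<bar> else 0)" for p :: "nat \<times> nat"
    define T4 where "T4 p = (if snd p = k then w (fst p) * w k * \<bar>M$$(fst p,l)\<bar> else 0)" for p :: "nat \<times> nat"
    have "(\<Sum>a\<in>{0..<N}-{b}. w (fst (ps ! a)) * w (snd (ps ! a)) * \<bar>transpose_mat (compound2 M) $$ (b,a)\<bar>)
        = (\<Sum>a\<in>{0..<N}-{b}. (\<lambda>p. w (fst p) * w (snd p) * \<bar>compound2_entry M p (k,l)\<bar>) (ps ! a))"
      using Cidx b kl by (intro sum.cong refl) auto
    also have "\<dots> = (\<Sum>p\<in>(\<lambda>a. ps ! a) ` ({0..<N}-{b}). w (fst p) * w (snd p) * \<bar>compound2_entry M p (k,l)\<bar>)"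
    proof -
      have "inj_on (\<lambda>a. ps ! a) ({0..<N}-{b})"
        using dist unfolding N_def by (intro inj_on_nth) auto
      then show ?thesis by (simp add: sum.reindex)
    qed
    also have "(\<lambda>a. ps ! a) ` ({0..<N}-{b}) = Q"
    proof
      show "(\<lambda>a. ps ! a) ` ({0..<N}-{b}) \<subseteq> Q"
      proof
        fix p assume "p \<in> (\<lambda>a. ps ! a) ` ({0..<N}-{b})"
        then obtain a where a0: "a \<in> {0..<N}-{b}" "p = ps ! a" by blast
        then have a: "a < N" "a \<noteq> b" "p = ps ! a" by auto
        have "ps ! a \<noteq> ps ! b" using dist a b unfolding N_def by (simp add: nth_eq_iff_index_eq)
        then show "p \<in> Q" using a kl unfolding Q_def P_def N_def by auto
      qed
      show "Q \<subseteq> (\<lambda>a. ps ! a) ` ({0..<N}-{b})"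
      proof
        fix p assume "p \<in> Q"
        then have p: "p \<in> set ps" "p \<noteq> ps ! b" unfolding Q_def P_def using kl by auto
        then obtain a where a: "a < N" "p = ps ! a" unfolding N_def by (metis in_set_conv_nth)
        then have "a \<noteq> b" using p by auto
        with a show "p \<in> (\<lambda>a. ps ! a) ` ({0..<N}-{b})" by auto
      qed
    qed
    also have "(\<Sum>p\<in>Q. w (fst p) * w (snd p) * \<bar>compound2_entry M p (k,l)\<bar>)
        \<le> (\<Sum>p\<in>Q. T1 p + T2 p + T3 p + T4 p)"
    proof (rule sum_mono)
      fix p assume "p \<in> Q"
      then obtain i j where p: "p = (i,j)" "i < n" "j < n" unfolding Q_def Pset by auto
      show "w (fst p) * w (snd p) * \<bar>compound2_entry M p (k,l)\<bar> \<le> T1 p + T2 p + T3 p + T4 p"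
        unfolding p(1) T1_def T2_def T3_def T4_def fst_conv snd_conv
        by (rule pointwise_bound[OF wnn[OF p(2)] wnn[OF p(3)]])
    qed
    also have "\<dots> = (\<Sum>p\<in>Q. T1 p) + (\<Sum>p\<in>Q. T2 p) + (\<Sum>p\<in>Q. T3 p) + (\<Sum>p\<in>Q. T4 p)"
      by (simp add: sum.distrib)
    finally have L0: "(\<Sum>a\<in>{0..<N}-{b}. w (fst (ps ! a)) * w (snd (ps ! a)) * \<bar>transpose_mat (compound2 M) $$ (b,a)\<bar>) \<le> (\<Sum>p\<in>Q. T1 p) + (\<Sum>p\<in>Q. T2 p) + (\<Sum>p\<in>Q. T3 p) + (\<Sum>p\<in>Q. T4 p)" .
    have e1: "(\<Sum>p\<in>Q. T1 p) = (\<Sum>i\<in>{0..<l}-{k}. w i * w l * \<bar>M$$(i,k)\<bar>)"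
    proof -
      have "(\<Sum>p\<in>Q. T1 p) = (\<Sum>i\<in>{i. (i,l)\<in>Q}. w i * w l * \<bar>M$$(i,k)\<bar>)"
        unfolding T1_def by (rule sum_snd_filter[OF finQ])
      moreover have "{i. (i,l)\<in>Q} = {0..<l}-{k}" unfolding Q_def Pset using k by auto
      ultimately show ?thesis by simp
    qed
    have e2: "(\<Sum>p\<in>Q. T2 p) = (\<Sum>i\<in>{l<..<n}. w l * w i * \<bar>M$$(i,k)\<bar>)"
    proof -
      have "(\<Sum>p\<in>Q. T2 p) = (\<Sum>i\<in>{j. (l,j)\<in>Q}. w l * w i * \<bar>M$$(i,k)\<bar>)"
        unfolding T2_def by (rule sum_fst_filter[OF finQ])
      moreover have "{j. (l,j)\<in>Q} = {l<..<n}" unfolding Q_def Pset using k by auto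
      ultimately show ?thesis by simp
    qed
    have e3: "(\<Sum>p\<in>Q. T3 p) = (\<Sum>i\<in>{k<..<n}-{l}. w k * w i * \<bar>M$$(i,l)\<bar>)"
    proof -
      have "(\<Sum>p\<in>Q. T3 p) = (\<Sum>i\<in>{j. (k,j)\<in>Q}. w k * w i * \<bar>M$$(i,l)\<bar>)"
        unfolding T3_def by (rule sum_fst_filter[OF finQ])
      moreover have "{j. (k,j)\<in>Q} = {k<..<n}-{l}" unfolding Q_def Pset using k by auto
      ultimately show ?thesis by simp
    qed
    have e4: "(\<Sum>p\<in>Q. T4 p) = (\<Sum>i\<in>{0..<k}. w i * w k * \<bar>M$$(i,l)\<bar>)"
    proof -
      have "(\<Sum>p\<in>Q. T4 p) = (\<Sum>i\<in>{i. (i,k)\<in>Q}. w i * w k * \<bar>M$$(i,l)\<bar>)"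
        unfolding T4_def by (rule sum_snd_filter[OF finQ])
      moreover have "{i. (i,k)\<in>Q} = {0..<k}" unfolding Q_def Pset using k by auto
      ultimately show ?thesis by simp
    qed
    have u1: "(\<Sum>i\<in>{0..<l}-{k}. w i * w l * \<bar>M$$(i,k)\<bar>) + (\<Sum>i\<in>{l<..<n}. w l * w i * \<bar>M$$(i,k)\<bar>)
         = w l * (\<Sum>i\<in>{0..<n}-{k,l}. w i * \<bar>M$$(i,k)\<bar>)"
    proof -
      have U: "{0..<n}-{k,l} = ({0..<l}-{k}) \<union> {l<..<n}" using k by auto
      have "(\<Sum>i\<in>{0..<n}-{k,l}. w i * \<bar>M$$(i,k)\<bar>) = (\<Sum>i\<in>{0..<l}-{k}. w i * \<bar>M$$(i,k)\<bar>) + (\<Sum>i\<in>{l<..<n}. w i * \<bar>M$$(i,k)\<bar>)"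
        unfolding U by (rule sum.union_disjoint) auto
      then show ?thesis by (simp add: sum_distrib_left algebra_simps)
    qed
    have u2: "(\<Sum>i\<in>{k<..<n}-{l}. w k * w i * \<bar>M$$(i,l)\<bar>) + (\<Sum>i\<in>{0..<k}. w i * w k * \<bar>M$$(i,l)\<bar>)
         = w k * (\<Sum>i\<in>{0..<n}-{k,l}. w i * \<bar>M$$(i,l)\<bar>)"
    proof -
      have U: "{0..<n}-{k,l} = ({k<..<n}-{l}) \<union> {0..<k}" using k by auto
      have "(\<Sum>i\<in>{0..<n}-{k,l}. w i * \<bar>M$$(i,l)\<bar>) = (\<Sum>i\<in>{k<..<n}-{l}. w i * \<bar>M$$(i,l)\<bar>) + (\<Sum>i\<in>{0..<k}. w i * \<bar>M$$(i,l)\<bar>)"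
        unfolding U by (rule sum.union_disjoint) auto
      then show ?thesis by (simp add: sum_distrib_left algebra_simps)
    qed
    have L: "(\<Sum>a\<in>{0..<N}-{b}. w (fst (ps ! a)) * w (snd (ps ! a)) * \<bar>transpose_mat (compound2 M) $$ (b,a)\<bar>)
        \<le> w l * (\<Sum>i\<in>{0..<n}-{k,l}. w i * \<bar>M$$(i,k)\<bar>) + w k * (\<Sum>i\<in>{0..<n}-{k,l}. w i * \<bar>M$$(i,l)\<bar>)"
      using L0 e1 e2 e3 e4 u1 u2 by linarith
    have s1: "(\<Sum>i\<in>{0..<n}-{k,l}. w i * \<bar>M$$(i,k)\<bar>) \<le> w k * M$$(k,k)"
    proof -
      have "(\<Sum>i\<in>{0..<n}-{k,l}. w i * \<bar>M$$(i,k)\<bar>) \<le> (\<Sum>i\<in>{0..<n}-{k}. w i * \<bar>M$$(i,k)\<bar>)"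
        by (rule sum_mono2) (use wnn in auto)
      also have "\<dots> \<le> w k * M$$(k,k)" using cd k by simp
      finally show ?thesis .
    qed
    have s2: "(\<Sum>i\<in>{0..<n}-{k,l}. w i * \<bar>M$$(i,l)\<bar>) \<le> w l * M$$(l,l)"
    proof -
      have "(\<Sum>i\<in>{0..<n}-{k,l}. w i * \<bar>M$$(i,l)\<bar>) \<le> (\<Sum>i\<in>{0..<n}-{l}. w i * \<bar>M$$(i,l)\<bar>)"
        by (rule sum_mono2) (use wnn in auto)
      also have "\<dots> \<le> w l * M$$(l,l)" using cd k by simp
      finally show ?thesis .
    qed
    have wl: "w l \<ge> 0" "w k \<ge> 0" using wnn k by auto
    have "w l * (\<Sum>i\<in>{0..<n}-{k,l}. w i * \<bar>M$$(i,k)\<bar>) + w k * (\<Sum>i\<in>{0..<n}-{k,l}. w i * \<bar>M$$(i,l)\<bar>)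
        \<le> w l * (w k * M$$(k,k)) + w k * (w l * M$$(l,l))"
      using mult_left_mono[OF s1 wl(1)] mult_left_mono[OF s2 wl(2)] by linarith
    also have "\<dots> = w k * w l * (M$$(k,k) + M$$(l,l))" by (simp add: algebra_simps)
    also have "\<dots> = w (fst (ps ! b)) * w (snd (ps ! b)) * transpose_mat (compound2 M) $$ (b,b)"
      using Cidx[OF b b] kl k by (simp add: compound2_entry_def)
    finally show "(\<Sum>a\<in>{0..<N}-{b}. w (fst (ps ! a)) * w (snd (ps ! a)) * \<bar>transpose_mat (compound2 M) $$ (b,a)\<bar>)
        \<le> w (fst (ps ! b)) * w (snd (ps ! b)) * transpose_mat (compound2 M) $$ (b,b)"
      using L by linarith
  qed
qed

definition walk :: "(nat \<Rightarrow> nat \<Rightarrow> nat \<Rightarrow> bool) \<Rightarrow> nat \<Rightarrow> nat \<Rightarrow> nat \<Rightarrow> (nat \<Rightarrow> nat) \<Rightarrow> (nat \<Rightarrow> nat) \<Rightarrow> bool" where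
  "walk R i k p x y \<longleftrightarrow> x 0 = i \<and> x p = k \<and> (\<forall>t<p. R (x t) (x (Suc t)) (y t))"

lemma walk_exists:
  assumes "(i,k) \<in> {(a,b). \<exists>c. R a b c}\<^sup>*"
  shows "\<exists>p x y. walk R i k p x y"
  using assms
proof (induction rule: rtrancl_induct)
  case base
  show ?case by (rule exI[of _ 0], rule exI[of _ "\<lambda>_. i"], rule exI[of _ "\<lambda>_. 0"]) (simp add: walk_def)
next
  case (step a b)
  from step.IH obtain p x y where w: "walk R i a p x y" by blast
  from step.hyps(2) obtain c where c: "R a b c" by blast
  define x' where "x' = x(Suc p := b)"
  define y' where "y' = y(p := c)"
  have "walk R i b (Suc p) x' y'"
    unfolding walk_def
  proof (intro conjI allI impI)
    show "x' 0 = i" using w unfolding walk_def x'_def by simp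
    show "x' (Suc p) = b" unfolding x'_def by simp
    fix t assume t: "t < Suc p"
    show "R (x' t) (x' (Suc t)) (y' t)"
    proof (cases "t = p")
      case True then show ?thesis using c w unfolding x'_def y'_def walk_def by simp
    next
      case False
      then have "t < p" using t by simp
      then show ?thesis using w unfolding x'_def y'_def walk_def by simp
    qed
  qed
  then show ?case by blast
qed

lemma walk_inj:
  assumes "walk R i k p x y"
  shows "\<exists>p x y. walk R i k p x y \<and> inj_on x {0..p}"
  using assms
proof (induction p arbitrary: x y rule: less_induct)
  case (less p)
  show ?case
  proof (cases "inj_on x {0..p}")
    case True then show ?thesis using less.prems by blast
  next
    case False
    then obtain a b where ab: "a \<le> p" "b \<le> p" "a \<noteq> b" "x a = x b"
      unfolding inj_on_def by auto
    obtain a b where ab: "a < b" "b \<le> p" "x a = x b"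
    proof (cases "a < b")
      case True then show ?thesis using that ab by blast
    next
      case False then have "b < a" using ab by simp
      then show ?thesis using that[of b a] ab by simp
    qed
    define d where "d = b - a"
    have d: "d > 0" "a + d = b" using ab unfolding d_def by auto
    define x' where "x' t = (if t \<le> a then x t else x (t + d))" for t
    define y' where "y' t = (if t < a then y t else y (t + d))" for t
    have wk: "walk R i k (p - d) x' y'"
      unfolding walk_def
    proof (intro conjI allI impI)
      show "x' 0 = i" using less.prems unfolding walk_def x'_def by simp
      show "x' (p - d) = k"
      proof (cases "p - d \<le> a")
        case True
        then have "p = b" using d ab by simp
        then have "p - d = a" using d by simp
        then show ?thesis using less.prems ab \<open>p = b\<close> unfolding walk_def x'_def by simp
      next
        case False
        then have "p - d + d = p" using d ab by simp
        then show ?thesis using less.prems False unfolding walk_def x'_def by simp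
      qed
      fix t assume t: "t < p - d"
      have R: "\<And>t. t < p \<Longrightarrow> R (x t) (x (Suc t)) (y t)" using less.prems unfolding walk_def by simp
      show "R (x' t) (x' (Suc t)) (y' t)"
      proof (cases "t < a")
        case True
        then show ?thesis using R[of t] ab unfolding x'_def y'_def by simp
      next
        case False
        have xt: "x' t = x (t + d)"
          using False d ab unfolding x'_def by (cases "t = a") auto
        have xt1: "x' (Suc t) = x (Suc (t + d))" using False unfolding x'_def by simp
        have yt: "y' t = y (t + d)" using False unfolding y'_def by simp
        have "t + d < p" using t d by simp
        then show ?thesis using R[of "t + d"] xt xt1 yt by simp
      qed
    qed
    have "p - d < p" using d ab by simp
    from less.IH[OF this wk] show ?thesis .
  qed
qed

lemma chain:
  fixes w a b :: "nat \<Rightarrow> real"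
  shows "(\<forall>t<p. w (x t) * a t = w (x (Suc t)) * b t) \<Longrightarrow> w (x 0) * (\<Prod>t<p. a t) = w (x p) * (\<Prod>t<p. b t)"
proof (induction p)
  case 0 then show ?case by simp
next
  case (Suc p)
  then have IH: "w (x 0) * (\<Prod>t<p. a t) = w (x p) * (\<Prod>t<p. b t)" by simp
  have e: "w (x p) * a p = w (x (Suc p)) * b p" using Suc.prems by simp
  have "w (x 0) * (\<Prod>t<Suc p. a t) = (w (x 0) * (\<Prod>t<p. a t)) * a p" by (simp add: mult.assoc)
  also have "\<dots> = (w (x p) * a p) * (\<Prod>t<p. b t)" using IH by (simp add: algebra_simps)
  also have "\<dots> = w (x (Suc p)) * (\<Prod>t<Suc p. b t)" using e by (simp add: algebra_simps)
  finally show ?case .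
qed

lemma und_edge:
  assumes A: "A \<in> carrier_mat n m" and "r < n" "c < m" "A $$ (r,c) \<noteq> 0"
  shows "Und r c \<in> dsr_edges A (transpose_mat A)"
proof -
  have "transpose_mat A $$ (c,r) = A $$ (r,c)" using assms by simp
  then show ?thesis using assms unfolding dsr_edges_def by auto
qed

lemma even_set: "{q::nat. q < 2 * L \<and> even q} = (\<lambda>t. 2 * t) ` {..<L}"
proof
  show "{q. q < 2 * L \<and> even q} \<subseteq> (\<lambda>t. 2 * t) ` {..<L}"
  proof
    fix q assume "q \<in> {q. q < 2 * L \<and> even q}"
    then have q: "q < 2 * L" "even q" by auto
    then obtain t where "q = 2 * t" by (auto elim: evenE)
    with q show "q \<in> (\<lambda>t. 2 * t) ` {..<L}" by auto
  qed
qed auto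

lemma odd_set: "{q::nat. q < 2 * L \<and> odd q} = (\<lambda>t. Suc (2 * t)) ` {..<L}"
proof
  show "{q. q < 2 * L \<and> odd q} \<subseteq> (\<lambda>t. Suc (2 * t)) ` {..<L}"
  proof
    fix q assume "q \<in> {q. q < 2 * L \<and> odd q}"
    then have q: "q < 2 * L" "odd q" by auto
    then obtain t where "q = Suc (2 * t)" by (auto elim: oddE)
    with q show "q \<in> (\<lambda>t. Suc (2 * t)) ` {..<L}" by auto
  qed
qed auto

lemma cycle_ratio:
  fixes w :: "nat \<Rightarrow> real"
  assumes A: "A \<in> carrier_mat n m" and st: "steady A (transpose_mat A)"
    and cols: "\<forall>c<m. card {a. a < n \<and> A $$ (a,c) \<noteq> 0} \<le> 2"
    and J: "J \<subseteq> {0..<m}" and jm: "j < m" and jJ: "j \<notin> J"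
    and ik: "i < n" "k < n" "i \<noteq> k" "A $$ (i,j) \<noteq> 0" "A $$ (k,j) \<noteq> 0"
    and wk: "walk (\<lambda>a b c. a < n \<and> b < n \<and> a \<noteq> b \<and> c \<in> J \<and> A$$(a,c) \<noteq> 0 \<and> A$$(b,c) \<noteq> 0) i k p x y"
    and inj: "inj_on x {0..p}"
    and wp: "\<forall>a<n. w a > 0"
    and good: "\<forall>c\<in>J. \<forall>a<n. \<forall>b<n. a \<noteq> b \<longrightarrow> A$$(a,c) \<noteq> 0 \<longrightarrow> A$$(b,c) \<noteq> 0 \<longrightarrow> w a * \<bar>A$$(a,c)\<bar> = w b * \<bar>A$$(b,c)\<bar>"
  shows "w i * \<bar>A$$(i,j)\<bar> = w k * \<bar>A$$(k,j)\<bar>"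
proof -
  have x0: "x 0 = i" and xp: "x p = k" using wk unfolding walk_def by auto
  have R: "x t < n \<and> x (Suc t) < n \<and> x t \<noteq> x (Suc t) \<and> y t \<in> J \<and> A$$(x t, y t) \<noteq> 0 \<and> A$$(x (Suc t), y t) \<noteq> 0"
    if "t < p" for t using wk that unfolding walk_def by blast
  have p0: "p > 0"
  proof (rule ccontr)
    assume "\<not> p > 0" then have "p = 0" by simp
    then show False using x0 xp ik(3) by simp
  qed
  have xinj: "a = b" if "a \<le> p" "b \<le> p" "x a = x b" for a b
    by (rule inj_onD[OF inj]) (use that in auto)
  define L where "L = Suc p"
  define Y where "Y t = (if t < p then y t else j)" for t
  have smod: "Suc t mod L = (if t < p then Suc t else 0)" if "t \<le> p" for t
    using that unfolding L_def by (cases "t < p") auto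
  have xn: "x t < n" if "t \<le> p" for t
  proof (cases "t < p")
    case True then show ?thesis using R by blast
  next
    case False then have "t = p" using that by simp
    then show ?thesis using xp ik by simp
  qed
  have Ym: "Y t < m" if "t \<le> p" for t
  proof (cases "t < p")
    case True then have "y t \<in> J" using R by blast
    then show ?thesis using J True unfolding Y_def by auto
  next
    case False then show ?thesis using jm unfolding Y_def by simp
  qed
  have A1: "A $$ (x t, Y t) \<noteq> 0" if "t \<le> p" for t
  proof (cases "t < p")
    case True then show ?thesis using R unfolding Y_def by simp
  next
    case False then have "t = p" using that by simp
    then show ?thesis using xp ik unfolding Y_def by simp
  qed
  have A2: "A $$ (x (Suc t mod L), Y t) \<noteq> 0" if "t \<le> p" for t
  proof (cases "t < p")
    case True then show ?thesis using R smod[OF that] unfolding Y_def by simp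
  next
    case False then have "t = p" using that by simp
    then show ?thesis using x0 ik smod[OF that] unfolding Y_def by simp
  qed
  have nx: "x (Suc t mod L) < n" if "t \<le> p" for t
    using xn[of "Suc t mod L"] smod[OF that] that by (cases "t < p") auto
  have Ykey: "Y s \<noteq> Y t" if st': "s < t" "t \<le> p" for s t
  proof (cases "t < p")
    case False
    then have "Y t = j" unfolding Y_def by simp
    moreover have "Y s \<in> J" using R[of s] st' unfolding Y_def by auto
    ultimately show ?thesis using jJ by auto
  next
    case True
    show ?thesis
    proof
      assume eq: "Y s = Y t"
      define c where "c = y t"
      have ys: "y s = c" using eq True st' unfolding Y_def c_def by simp
      have cJ: "c \<in> J" using R[OF True] unfolding c_def by blast
      then have cm: "c < m" using J by auto
      have d1: "x s \<noteq> x (Suc s)" using xinj[of s "Suc s"] st' by auto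
      have d2: "x s \<noteq> x (Suc t)" using xinj[of s "Suc t"] st' True by auto
      have d3: "x (Suc s) \<noteq> x (Suc t)" using xinj[of "Suc s" "Suc t"] st' True by auto
      have sub: "{x s, x (Suc s), x (Suc t)} \<subseteq> {a. a < n \<and> A $$ (a,c) \<noteq> 0}"
        using R[of s] R[OF True] st' True ys unfolding c_def by auto
      have "card {x s, x (Suc s), x (Suc t)} = 3" using d1 d2 d3 by simp
      moreover have "card {x s, x (Suc s), x (Suc t)} \<le> card {a. a < n \<and> A $$ (a,c) \<noteq> 0}"
        by (rule card_mono[OF _ sub]) simp
      moreover have "card {a. a < n \<and> A $$ (a,c) \<noteq> 0} \<le> 2" using cols cm by blast
      ultimately show False by linarith
    qed
  qed
  have Yinj: "a = b" if "a \<le> p" "b \<le> p" "Y a = Y b" for a b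
  proof (rule ccontr)
    assume "a \<noteq> b"
    then have "a < b \<or> b < a" by auto
    then show False using Ykey[of a b] Ykey[of b a] that by auto
  qed
  define V where "V q = (if even q then SV (x (q div 2)) else RV (Y (q div 2)))" for q
  define E where "E q = (if even q then Und (x (q div 2)) (Y (q div 2))
                         else Und (x (Suc (q div 2) mod L)) (Y (q div 2)))" for q
  define vs where "vs = map V [0..<2*L]"
  define es where "es = map E [0..<2*L]"
  have lens: "length vs = 2*L" "length es = 2*L" unfolding vs_def es_def by auto
  have vsn: "vs ! q = V q" if "q < 2*L" for q using that unfolding vs_def by simp
  have esn: "es ! q = E q" if "q < 2*L" for q using that unfolding es_def by simp
  have qdiv: "q div 2 \<le> p" if "q < 2*L" for q using that unfolding L_def by presburger
  have cyc: "dsr_cycle A (transpose_mat A) vs es"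
    unfolding dsr_cycle_def
  proof (intro conjI allI impI)
    show "length es = length vs" using lens by simp
    show "vs \<noteq> []" unfolding vs_def L_def by simp
    show "distinct vs" unfolding vs_def distinct_map
    proof (intro conjI)
      show "distinct [0..<2*L]" by simp
      show "inj_on V (set [0..<2*L])"
      proof (rule inj_onI)
        fix q1 q2 assume q: "q1 \<in> set [0..<2*L]" "q2 \<in> set [0..<2*L]" "V q1 = V q2"
        then have q': "q1 < 2*L" "q2 < 2*L" by auto
        show "q1 = q2"
        proof (cases "even q1")
          case True note e1 = True
          show ?thesis
          proof (cases "even q2")
            case True
            then have "x (q1 div 2) = x (q2 div 2)" using e1 q(3) unfolding V_def by simp
            then have "q1 div 2 = q2 div 2" using xinj qdiv q' by blast
            then show ?thesis using e1 True by presburger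
          next
            case False then show ?thesis using e1 q(3) unfolding V_def by simp
          qed
        next
          case False note o1 = False
          show ?thesis
          proof (cases "even q2")
            case True then show ?thesis using o1 q(3) unfolding V_def by simp
          next
            case False
            then have "Y (q1 div 2) = Y (q2 div 2)" using o1 q(3) unfolding V_def by simp
            then have "q1 div 2 = q2 div 2" using Yinj qdiv q' by blast
            then show ?thesis using o1 False by presburger
          qed
        qed
      qed
    qed
    show "distinct es" unfolding es_def distinct_map
    proof (intro conjI)
      show "distinct [0..<2*L]" by simp
      show "inj_on E (set [0..<2*L])"
      proof (rule inj_onI)
        fix q1 q2 assume q: "q1 \<in> set [0..<2*L]" "q2 \<in> set [0..<2*L]" "E q1 = E q2"
        then have q': "q1 < 2*L" "q2 < 2*L" by auto
        have "Y (q1 div 2) = Y (q2 div 2)" using q(3) unfolding E_def by (auto split: if_splits)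
        then have tt: "q1 div 2 = q2 div 2" using Yinj qdiv q' by blast
        define t where "t = q1 div 2"
        have tp: "t \<le> p" using qdiv q' unfolding t_def by blast
        have neq: "x t \<noteq> x (Suc t mod L)"
        proof
          assume "x t = x (Suc t mod L)"
          moreover have "Suc t mod L \<le> p" using smod[OF tp] tp by (cases "t < p") auto
          ultimately have "t = Suc t mod L" using xinj tp by blast
          then show False using smod[OF tp] p0 by (cases "t < p") auto
        qed
        show "q1 = q2"
        proof (cases "even q1 = even q2")
          case True then show ?thesis using tt by presburger
        next
          case False
          then have "x t = x (Suc t mod L)" using q(3) tt unfolding E_def t_def by (auto split: if_splits)
          with neq show ?thesis by simp
        qed
      qed
    qed
    show "set es \<subseteq> dsr_edges A (transpose_mat A)"
    proof
      fix e assume "e \<in> set es"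
      then obtain q where q: "q < 2*L" "e = E q" unfolding es_def by auto
      have tp: "q div 2 \<le> p" using qdiv[OF q(1)] .
      show "e \<in> dsr_edges A (transpose_mat A)"
      proof (cases "even q")
        case True
        then have "e = Und (x (q div 2)) (Y (q div 2))" using q unfolding E_def by simp
        then show ?thesis using und_edge[OF A xn[OF tp] Ym[OF tp] A1[OF tp]] by simp
      next
        case False
        then have "e = Und (x (Suc (q div 2) mod L)) (Y (q div 2))" using q unfolding E_def by simp
        then show ?thesis using und_edge[OF A nx[OF tp] Ym[OF tp] A2[OF tp]] by simp
      qed
    qed
    fix q assume "q < length es"
    then have q: "q < 2*L" using lens by simp
    have tp: "q div 2 \<le> p" using qdiv[OF q] .
    show "traverses (es ! q) (vs ! q) (vs ! (Suc q mod length vs))"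
    proof (cases "even q")
      case True
      then have "Suc q < 2*L" using q by presburger
      then have s: "Suc q mod length vs = Suc q" using lens by simp
      have "Suc q div 2 = q div 2" using True by presburger
      then show ?thesis unfolding s esn[OF q] vsn[OF q] vsn[OF \<open>Suc q < 2*L\<close>]
        using True unfolding E_def V_def traverses_def by simp
    next
      case False
      have s: "Suc q mod length vs = 2 * (Suc (q div 2) mod L)"
      proof -
        have e: "Suc q = 2 * Suc (q div 2)" using False by presburger
        have "Suc q mod (2*L) = (2 * Suc (q div 2)) mod (2*L)" by (simp only: e)
        also have "\<dots> = 2 * (Suc (q div 2) mod L)" by (rule mod_mult_mult1)
        finally have "Suc q mod (2*L) = 2 * (Suc (q div 2) mod L)" .
        then show ?thesis using lens by simp
      qed
      have "Suc (q div 2) mod L < L" unfolding L_def by simp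
      then have l: "2 * (Suc (q div 2) mod L) < 2*L" by simp
      have "V (2 * (Suc (q div 2) mod L)) = SV (x (Suc (q div 2) mod L))" unfolding V_def by simp
      then show ?thesis unfolding s esn[OF q] vsn[OF q] vsn[OF l]
        using False unfolding E_def V_def traverses_def by simp
    qed
  qed
  have sc: "s_cycle A es" using st cyc unfolding steady_def by blast
  define a where "a t = \<bar>A $$ (x t, Y t)\<bar>" for t
  define b where "b t = \<bar>A $$ (x (Suc t mod L), Y t)\<bar>" for t
  have lab: "the (dsr_label A (Und r c)) = \<bar>A $$ (r,c)\<bar>" for r c unfolding dsr_label_def by simp
  have pe: "(\<Prod>q\<in>{q. q < length es \<and> even q}. the (dsr_label A (es ! q))) = (\<Prod>t<L. a t)"
  proof -
    have "(\<Prod>q\<in>{q. q < length es \<and> even q}. the (dsr_label A (es ! q)))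
        = (\<Prod>q\<in>(\<lambda>t. 2 * t) ` {..<L}. the (dsr_label A (es ! q)))" using lens even_set by simp
    also have "\<dots> = (\<Prod>t<L. the (dsr_label A (es ! (2 * t))))"
      by (subst prod.reindex) (auto simp: inj_on_def)
    also have "\<dots> = (\<Prod>t<L. a t)"
    proof (rule prod.cong[OF refl])
      fix t assume "t \<in> {..<L}"
      then have "2 * t < 2 * L" by simp
      then show "the (dsr_label A (es ! (2 * t))) = a t" unfolding esn[OF \<open>2*t < 2*L\<close>] E_def a_def by (simp add: lab)
    qed
    finally show ?thesis .
  qed
  have po: "(\<Prod>q\<in>{q. q < length es \<and> odd q}. the (dsr_label A (es ! q))) = (\<Prod>t<L. b t)"
  proof -
    have "(\<Prod>q\<in>{q. q < length es \<and> odd q}. the (dsr_label A (es ! q)))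
        = (\<Prod>q\<in>(\<lambda>t. Suc (2 * t)) ` {..<L}. the (dsr_label A (es ! q)))" using lens odd_set by simp
    also have "\<dots> = (\<Prod>t<L. the (dsr_label A (es ! Suc (2 * t))))"
      by (subst prod.reindex) (auto simp: inj_on_def)
    also have "\<dots> = (\<Prod>t<L. b t)"
    proof (rule prod.cong[OF refl])
      fix t assume "t \<in> {..<L}"
      then have "Suc (2 * t) < 2 * L" by simp
      moreover have "Suc (2 * t) div 2 = t" by presburger
      ultimately show "the (dsr_label A (es ! Suc (2 * t))) = b t" unfolding esn[OF \<open>Suc (2*t) < 2*L\<close>] E_def b_def by (simp add: lab)
    qed
    finally show ?thesis .
  qed
  have cyceq: "(\<Prod>t<L. a t) = (\<Prod>t<L. b t)" using sc pe po unfolding s_cycle_def by simp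
  have ap: "a p = \<bar>A $$ (k,j)\<bar>" unfolding a_def Y_def using xp by simp
  have bp: "b p = \<bar>A $$ (i,j)\<bar>" unfolding b_def Y_def L_def using x0 by simp
  have bt: "b t = \<bar>A $$ (x (Suc t), y t)\<bar>" if "t < p" for t
    using that smod[of t] unfolding b_def Y_def by simp
  have at: "a t = \<bar>A $$ (x t, y t)\<bar>" if "t < p" for t using that unfolding a_def Y_def by simp
  have ch: "\<forall>t<p. w (x t) * a t = w (x (Suc t)) * b t"
  proof (intro allI impI)
    fix t assume t: "t < p"
    have "w (x t) * \<bar>A $$ (x t, y t)\<bar> = w (x (Suc t)) * \<bar>A $$ (x (Suc t), y t)\<bar>"
      using good R[OF t] by blast
    then show "w (x t) * a t = w (x (Suc t)) * b t" using at[OF t] bt[OF t] by simp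
  qed
  have wchain: "w i * (\<Prod>t<p. a t) = w k * (\<Prod>t<p. b t)" using chain[of p w x a b] ch x0 xp by simp
  have ce: "(\<Prod>t<p. a t) * \<bar>A $$ (k,j)\<bar> = (\<Prod>t<p. b t) * \<bar>A $$ (i,j)\<bar>"
    using cyceq ap bp unfolding L_def by simp
  have PB: "(\<Prod>t<p. b t) \<noteq> 0"
  proof -
    have "\<forall>t\<in>{..<p}. b t \<noteq> 0" using bt R by auto
    then show ?thesis by simp
  qed
  have "(w i * \<bar>A$$(i,j)\<bar>) * (\<Prod>t<p. b t) = w i * ((\<Prod>t<p. a t) * \<bar>A $$ (k,j)\<bar>)"
    using ce by (simp add: algebra_simps)
  also have "\<dots> = (w k * \<bar>A$$(k,j)\<bar>) * (\<Prod>t<p. b t)"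
    using wchain by (simp add: algebra_simps)
  finally show ?thesis using PB by simp
qed

lemma weights_J:
  assumes A: "A \<in> carrier_mat n m" and st: "steady A (transpose_mat A)"
    and cols: "\<forall>c<m. card {a. a < n \<and> A $$ (a,c) \<noteq> 0} \<le> 2"
  shows "finite J \<Longrightarrow> J \<subseteq> {0..<m} \<Longrightarrow> \<exists>w::nat\<Rightarrow>real. (\<forall>a<n. w a > 0) \<and>
     (\<forall>c\<in>J. \<forall>a<n. \<forall>b<n. a \<noteq> b \<longrightarrow> A$$(a,c) \<noteq> 0 \<longrightarrow> A$$(b,c) \<noteq> 0 \<longrightarrow> w a * \<bar>A$$(a,c)\<bar> = w b * \<bar>A$$(b,c)\<bar>)"
proof (induction J rule: finite_induct)
  case empty
  show ?case by (rule exI[of _ "\<lambda>_. 1"]) simp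
next
  case (insert j J)
  then have J: "J \<subseteq> {0..<m}" and jm: "j < m" by auto
  from insert.IH[OF J] obtain w :: "nat \<Rightarrow> real" where wp: "\<forall>a<n. w a > 0"
    and good: "\<forall>c\<in>J. \<forall>a<n. \<forall>b<n. a \<noteq> b \<longrightarrow> A$$(a,c) \<noteq> 0 \<longrightarrow> A$$(b,c) \<noteq> 0 \<longrightarrow> w a * \<bar>A$$(a,c)\<bar> = w b * \<bar>A$$(b,c)\<bar>"
    by blast
  show ?case
  proof (cases "\<exists>i k. i < n \<and> k < n \<and> i \<noteq> k \<and> A$$(i,j) \<noteq> 0 \<and> A$$(k,j) \<noteq> 0")
    case False
    have G: "\<forall>c\<in>insert j J. \<forall>a<n. \<forall>b<n. a \<noteq> b \<longrightarrow> A$$(a,c) \<noteq> 0 \<longrightarrow> A$$(b,c) \<noteq> 0 \<longrightarrow> w a * \<bar>A$$(a,c)\<bar> = w b * \<bar>A$$(b,c)\<bar>"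
    proof (intro ballI allI impI)
      fix c a b assume c: "c \<in> insert j J" and ab: "a < n" "b < n" "a \<noteq> b" "A$$(a,c) \<noteq> 0" "A$$(b,c) \<noteq> 0"
      show "w a * \<bar>A$$(a,c)\<bar> = w b * \<bar>A$$(b,c)\<bar>"
      proof (cases "c = j")
        case True
        then have "\<exists>i k. i < n \<and> k < n \<and> i \<noteq> k \<and> A$$(i,j) \<noteq> 0 \<and> A$$(k,j) \<noteq> 0" using ab by blast
        with False show ?thesis by contradiction
      next
        case False
        then have "c \<in> J" using c by simp
        then show ?thesis using good ab by blast
      qed
    qed
    show ?thesis by (rule exI[of _ w], rule conjI[OF wp G])
  next
    case True
    then obtain i k where ik: "i < n" "k < n" "i \<noteq> k" "A$$(i,j) \<noteq> 0" "A$$(k,j) \<noteq> 0" by blast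
    have col2: "a = i \<or> a = k" if a: "a < n" "A$$(a,j) \<noteq> 0" for a
    proof (rule ccontr)
      assume "\<not> (a = i \<or> a = k)"
      then have d: "a \<noteq> i" "a \<noteq> k" by auto
      have sub: "{i, k, a} \<subseteq> {a. a < n \<and> A $$ (a,j) \<noteq> 0}" using ik a by auto
      have "card {i, k, a} = 3" using d ik(3) by simp
      moreover have "card {i, k, a} \<le> card {a. a < n \<and> A $$ (a,j) \<noteq> 0}"
        by (rule card_mono[OF _ sub]) simp
      moreover have "card {a. a < n \<and> A $$ (a,j) \<noteq> 0} \<le> 2" using cols jm by blast
      ultimately show False by linarith
    qed
    define Rr where "Rr = (\<lambda>a b c. a < n \<and> b < n \<and> a \<noteq> b \<and> c \<in> J \<and> A$$(a,c) \<noteq> 0 \<and> A$$(b,c) \<noteq> 0)"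
    define E where "E = {(a,b). \<exists>c. Rr a b c}"
    have pairs: "(a = i \<and> b = k) \<or> (a = k \<and> b = i)" if "a < n" "b < n" "a \<noteq> b" "A$$(a,j) \<noteq> 0" "A$$(b,j) \<noteq> 0" for a b
      using col2[of a] col2[of b] that by auto
    show ?thesis
    proof (cases "(i,k) \<in> E\<^sup>*")
      case True
      from walk_exists[OF True[unfolded E_def]] obtain p x y where "walk Rr i k p x y" by blast
      from walk_inj[OF this] obtain p x y where wk: "walk Rr i k p x y" and inj: "inj_on x {0..p}" by blast
      have eq: "w i * \<bar>A$$(i,j)\<bar> = w k * \<bar>A$$(k,j)\<bar>"
        by (rule cycle_ratio[OF A st cols J jm insert.hyps(2) ik wk[unfolded Rr_def] inj wp good])
      have "\<forall>c\<in>insert j J. \<forall>a<n. \<forall>b<n. a \<noteq> b \<longrightarrow> A$$(a,c) \<noteq> 0 \<longrightarrow> A$$(b,c) \<noteq> 0 \<longrightarrow> w a * \<bar>A$$(a,c)\<bar> = w b * \<bar>A$$(b,c)\<bar>"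
      proof (intro ballI allI impI)
        fix c a b assume c: "c \<in> insert j J" and ab: "a < n" "b < n" "a \<noteq> b" "A$$(a,c) \<noteq> 0" "A$$(b,c) \<noteq> 0"
        show "w a * \<bar>A$$(a,c)\<bar> = w b * \<bar>A$$(b,c)\<bar>"
        proof (cases "c = j")
          case True
          then have "A$$(a,j) \<noteq> 0" "A$$(b,j) \<noteq> 0" using ab by simp_all
          from pairs[OF ab(1-3) this] have "(a = i \<and> b = k) \<or> (a = k \<and> b = i)" .
          then show ?thesis
          proof
            assume "a = i \<and> b = k" then show ?thesis using eq True by simp
          next
            assume "a = k \<and> b = i" then show ?thesis using eq True by simp
          qed
        next
          case False
          then have "c \<in> J" using c by simp
          then show ?thesis using good ab by blast
        qed
      qed
      then show ?thesis by (intro exI[of _ w] conjI[OF wp])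
    next
      case False
      define s where "s = (w k * \<bar>A$$(k,j)\<bar>) / (w i * \<bar>A$$(i,j)\<bar>)"
      have wi: "w i * \<bar>A$$(i,j)\<bar> > 0" using wp ik by simp
      have s0: "s > 0" unfolding s_def using wp ik by simp
      define w' where "w' a = (if (i,a) \<in> E\<^sup>* then s * w a else w a)" for a
      have w'p: "\<forall>a<n. w' a > 0" unfolding w'_def using wp s0 by simp
      have "\<forall>c\<in>insert j J. \<forall>a<n. \<forall>b<n. a \<noteq> b \<longrightarrow> A$$(a,c) \<noteq> 0 \<longrightarrow> A$$(b,c) \<noteq> 0 \<longrightarrow> w' a * \<bar>A$$(a,c)\<bar> = w' b * \<bar>A$$(b,c)\<bar>"
      proof (intro ballI allI impI)
        fix c a b assume c: "c \<in> insert j J" and ab: "a < n" "b < n" "a \<noteq> b" "A$$(a,c) \<noteq> 0" "A$$(b,c) \<noteq> 0"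
        show "w' a * \<bar>A$$(a,c)\<bar> = w' b * \<bar>A$$(b,c)\<bar>"
        proof (cases "c = j")
          case True
          have wi': "w' i = s * w i" unfolding w'_def by simp
          have wk': "w' k = w k" unfolding w'_def using False by simp
          have nz: "w i \<noteq> 0" "\<bar>A$$(i,j)\<bar> \<noteq> 0" using wp ik by auto
          have "s * (w i * \<bar>A$$(i,j)\<bar>) = w k * \<bar>A$$(k,j)\<bar>" unfolding s_def using nz by (simp add: field_simps)
          then have "s * w i * \<bar>A$$(i,j)\<bar> = w k * \<bar>A$$(k,j)\<bar>" by (simp add: mult.assoc)
          then have "w' i * \<bar>A$$(i,j)\<bar> = w' k * \<bar>A$$(k,j)\<bar>" using wi' wk' by simp
          note eq = this
          have "A$$(a,j) \<noteq> 0" "A$$(b,j) \<noteq> 0" using ab True by simp_all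
          from pairs[OF ab(1-3) this] have "(a = i \<and> b = k) \<or> (a = k \<and> b = i)" .
          then show ?thesis
          proof
            assume "a = i \<and> b = k" then show ?thesis using eq True by simp
          next
            assume "a = k \<and> b = i" then show ?thesis using eq True by simp
          qed
        next
          case cJ: False
          then have cJ: "c \<in> J" using c by simp
          have e1: "(a,b) \<in> E" "(b,a) \<in> E" unfolding E_def Rr_def using ab cJ by auto
          have iff: "(i,a) \<in> E\<^sup>* \<longleftrightarrow> (i,b) \<in> E\<^sup>*"
            using e1 rtrancl_into_rtrancl[of i a E b] rtrancl_into_rtrancl[of i b E a] by blast
          have g: "w a * \<bar>A$$(a,c)\<bar> = w b * \<bar>A$$(b,c)\<bar>" using good cJ ab by blast
          show ?thesis
          proof (cases "(i,a) \<in> E\<^sup>*")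
            case True
            then have "w' a = s * w a" "w' b = s * w b" using iff unfolding w'_def by auto
            then show ?thesis using g by (simp add: mult.assoc)
          next
            case False
            then have "w' a = w a" "w' b = w b" using iff unfolding w'_def by auto
            then show ?thesis using g by simp
          qed
        qed
      qed
      then show ?thesis by (intro exI[of _ w'] conjI[OF w'p])
    qed
  qed
qed

lemma weights:
  assumes A: "A \<in> carrier_mat n m" and st: "steady A (transpose_mat A)"
    and cols: "\<forall>c<m. card {a. a < n \<and> A $$ (a,c) \<noteq> 0} \<le> 2"
  shows "\<exists>w::nat\<Rightarrow>real. (\<forall>a<n. w a > 0) \<and>
     (\<forall>c<m. \<forall>a<n. \<forall>b<n. a \<noteq> b \<longrightarrow> A$$(a,c) \<noteq> 0 \<longrightarrow> A$$(b,c) \<noteq> 0 \<longrightarrow> w a * \<bar>A$$(a,c)\<bar> = w b * \<bar>A$$(b,c)\<bar>)"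
proof -
  from weights_J[OF A st cols, of "{0..<m}", OF finite_atLeastLessThan order_refl] obtain w :: "nat \<Rightarrow> real" where
    wp: "(\<forall>a<n. w a > 0)" and G: "\<forall>c\<in>{0..<m}. \<forall>a<n. \<forall>b<n. a \<noteq> b \<longrightarrow> A$$(a,c) \<noteq> 0 \<longrightarrow> A$$(b,c) \<noteq> 0 \<longrightarrow> w a * \<bar>A$$(a,c)\<bar> = w b * \<bar>A$$(b,c)\<bar>"
    by blast
  have G': "\<forall>c<m. \<forall>a<n. \<forall>b<n. a \<noteq> b \<longrightarrow> A$$(a,c) \<noteq> 0 \<longrightarrow> A$$(b,c) \<noteq> 0 \<longrightarrow> w a * \<bar>A$$(a,c)\<bar> = w b * \<bar>A$$(b,c)\<bar>"
  proof (intro allI impI)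
    fix c a b assume h: "c < m" "a < n" "b < n" "a \<noteq> b" "A$$(a,c) \<noteq> 0" "A$$(b,c) \<noteq> 0"
    then have "c \<in> {0..<m}" by simp
    with G h show "w a * \<bar>A$$(a,c)\<bar> = w b * \<bar>A$$(b,c)\<bar>" by blast
  qed
  show ?thesis by (rule exI[of _ w], rule conjI[OF wp G'])
qed

fun sv :: "dsr_vertex \<Rightarrow> dsr_vertex" where
  "sv (SV i) = RV i" | "sv (RV j) = SV j"

fun se :: "dsr_edge \<Rightarrow> dsr_edge" where
  "se (Und i j) = Und j i" | "se (RS i j) = SR j i" | "se (SR i j) = RS j i"

lemma sv_inj: "inj sv"
proof (rule injI)
  fix a b assume "sv a = sv b" then show "a = b" by (cases a; cases b) auto
qed

lemma se_inj: "inj se"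
proof (rule injI)
  fix a b assume "se a = se b" then show "a = b" by (cases a; cases b) auto
qed

lemma trav_swap: "traverses e u v \<Longrightarrow> traverses (se e) (sv u) (sv v)"
  by (cases e) (auto simp: traverses_def)

lemma edges_T:
  assumes A: "A \<in> carrier_mat n m" and e: "e \<in> dsr_edges (transpose_mat A) A"
  shows "\<exists>i j. e = Und i j \<and> i < m \<and> j < n \<and> A $$ (j,i) \<noteq> 0"
proof -
  have T: "transpose_mat A $$ (i,j) = A $$ (j,i)" if "i < m" "j < n" for i j using A that by simp
  from e A show ?thesis unfolding dsr_edges_def using T by auto
qed

lemma steady_transpose:
  assumes A: "A \<in> carrier_mat n m" and st: "steady A (transpose_mat A)"
  shows "steady (transpose_mat A) A"
  unfolding steady_def
proof (intro allI impI)
  fix vs es assume cyc: "dsr_cycle (transpose_mat A) A vs es"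
  have E: "\<And>e. e \<in> set es \<Longrightarrow> \<exists>i j. e = Und i j \<and> i < m \<and> j < n \<and> A $$ (j,i) \<noteq> 0"
    using cyc edges_T[OF A] unfolding dsr_cycle_def by blast
  have cyc': "dsr_cycle A (transpose_mat A) (map sv vs) (map se es)"
    unfolding dsr_cycle_def
  proof (intro conjI allI impI)
    show "length (map se es) = length (map sv vs)" using cyc unfolding dsr_cycle_def by simp
    show "map sv vs \<noteq> []" using cyc unfolding dsr_cycle_def by simp
    show "distinct (map sv vs)" using cyc sv_inj unfolding dsr_cycle_def by (simp add: distinct_map inj_on_def inj_def)
    show "distinct (map se es)" using cyc se_inj unfolding dsr_cycle_def by (simp add: distinct_map inj_on_def inj_def)
    show "set (map se es) \<subseteq> dsr_edges A (transpose_mat A)"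
    proof
      fix f assume "f \<in> set (map se es)"
      then obtain e where e: "e \<in> set es" "f = se e" by auto
      from E[OF e(1)] obtain i j where ij: "e = Und i j" "i < m" "j < n" "A $$ (j,i) \<noteq> 0" by blast
      then have "f = Und j i" using e by simp
      then show "f \<in> dsr_edges A (transpose_mat A)" using und_edge[OF A ij(3) ij(2) ij(4)] by simp
    qed
    fix q assume q: "q < length (map se es)"
    have l: "length es = length vs" using cyc unfolding dsr_cycle_def by simp
    have "traverses (es ! q) (vs ! q) (vs ! (Suc q mod length vs))"
      using cyc q unfolding dsr_cycle_def by simp
    moreover have "length vs > 0" using q l by (cases vs) auto
    then have "Suc q mod length vs < length vs" by (rule mod_less_divisor)
    ultimately show "traverses (map se es ! q) (map sv vs ! q) (map sv vs ! (Suc q mod length (map sv vs)))"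
      using q l trav_swap by simp
  qed
  have sc: "s_cycle A (map se es)" using st cyc' unfolding steady_def by blast
  have lab: "dsr_label A (se e) = dsr_label (transpose_mat A) e" if "e \<in> set es" for e
  proof -
    from E[OF that] obtain i j where ij: "e = Und i j" "i < m" "j < n" by blast
    then show ?thesis using A unfolding dsr_label_def by simp
  qed
  have labq: "dsr_label A (map se es ! q) = dsr_label (transpose_mat A) (es ! q)" if "q < length es" for q
    using lab[of "es ! q"] that by simp
  show "s_cycle (transpose_mat A) es"
    unfolding s_cycle_def
  proof (intro conjI)
    show "\<forall>e\<in>set es. dsr_label (transpose_mat A) e \<noteq> None"
      using E unfolding dsr_label_def by fastforce
    have "(\<Prod>k\<in>{k. k < length es \<and> even k}. the (dsr_label (transpose_mat A) (es ! k)))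
        = (\<Prod>k\<in>{k. k < length (map se es) \<and> even k}. the (dsr_label A (map se es ! k)))"
      using labq by (intro prod.cong) auto
    also have "\<dots> = (\<Prod>k\<in>{k. k < length (map se es) \<and> odd k}. the (dsr_label A (map se es ! k)))"
      using sc unfolding s_cycle_def by blast
    also have "\<dots> = (\<Prod>k\<in>{k. k < length es \<and> odd k}. the (dsr_label (transpose_mat A) (es ! k)))"
      using labq by (intro prod.cong) auto
    finally show "(\<Prod>k\<in>{k. k < length es \<and> even k}. the (dsr_label (transpose_mat A) (es ! k)))
        = (\<Prod>k\<in>{k. k < length es \<and> odd k}. the (dsr_label (transpose_mat A) (es ! k)))" .
  qed
qed

lemma Q0_transpose:
  assumes A: "A \<in> carrier_mat n m" and B: "B \<in> Q0 (transpose_mat A)"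
  shows "transpose_mat B \<in> Q0 A"
proof -
  have Bc: "B \<in> carrier_mat m n" using B A unfolding Q0_def by auto
  have Bs: "B $$ (j,i) = 0 \<or> sgn (B $$ (j,i)) = sgn (transpose_mat A $$ (j,i))" if "j < m" "i < n" for i j
    using B A that unfolding Q0_def by auto
  show ?thesis unfolding Q0_def
  proof (intro CollectI conjI allI impI)
    show "transpose_mat B \<in> carrier_mat (dim_row A) (dim_col A)" using A Bc by simp
    fix i j assume ij: "i < dim_row A" "j < dim_col A"
    then have ij': "i < n" "j < m" using A by auto
    have "transpose_mat B $$ (i,j) = B $$ (j,i)" using Bc ij' by simp
    moreover have "transpose_mat A $$ (j,i) = A $$ (i,j)" using A ij' by simp
    ultimately show "transpose_mat B $$ (i,j) = 0 \<or> sgn (transpose_mat B $$ (i,j)) = sgn (A $$ (i,j))"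
      using Bs[OF ij'(2) ij'(1)] by simp
  qed
qed

lemma eig_swap:
  fixes A B :: "real mat"
  assumes A: "A \<in> carrier_mat n m" and B: "B \<in> carrier_mat m n"
    and ev: "eigenvalue (map_mat complex_of_real (A * B)) z" and z: "z \<noteq> 0"
  shows "eigenvalue (map_mat complex_of_real (B * A)) z"
proof -
  define Ac where "Ac = map_mat complex_of_real A"
  define Bc where "Bc = map_mat complex_of_real B"
  have Ac: "Ac \<in> carrier_mat n m" and Bc: "Bc \<in> carrier_mat m n" using A B unfolding Ac_def Bc_def by auto
  have AB: "map_mat complex_of_real (A * B) = Ac * Bc" unfolding Ac_def Bc_def by (rule of_real_hom.mat_hom_mult[OF A B])
  have BA: "map_mat complex_of_real (B * A) = Bc * Ac" unfolding Ac_def Bc_def by (rule of_real_hom.mat_hom_mult[OF B A])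
  have ABc: "Ac * Bc \<in> carrier_mat n n" using Ac Bc by simp
  from ev obtain x where x: "x \<in> carrier_vec n" "x \<noteq> 0\<^sub>v n" "(Ac * Bc) *\<^sub>v x = z \<cdot>\<^sub>v x"
    unfolding AB eigenvalue_def eigenvector_def using ABc by auto
  define u where "u = Bc *\<^sub>v x"
  have u: "u \<in> carrier_vec m" unfolding u_def using Bc x(1) by simp
  have Au: "Ac *\<^sub>v u = z \<cdot>\<^sub>v x" unfolding u_def using x(3) Ac Bc x(1) by simp
  have u0: "u \<noteq> 0\<^sub>v m"
  proof
    assume "u = 0\<^sub>v m"
    then have "Ac *\<^sub>v u = 0\<^sub>v n" using Ac by (intro eq_vecI) (auto simp: scalar_prod_def)
    with Au have zx: "z \<cdot>\<^sub>v x = 0\<^sub>v n" by simp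
    from x(1,2) obtain i where i: "i < n" "x $ i \<noteq> 0" by (metis eq_vecI carrier_vecD index_zero_vec(1) index_zero_vec(2))
    have "(z \<cdot>\<^sub>v x) $ i = z * x $ i" using i x(1) by simp
    also have "\<dots> \<noteq> 0" using z i by simp
    finally show False using zx i by simp
  qed
  have "(Bc * Ac) *\<^sub>v u = Bc *\<^sub>v (Ac *\<^sub>v u)" using Ac Bc u by simp
  also have "\<dots> = Bc *\<^sub>v (z \<cdot>\<^sub>v x)" using Au by simp
  also have "\<dots> = z \<cdot>\<^sub>v u" unfolding u_def by (rule mult_mat_vec[OF Bc x(1)])
  finally have "(Bc * Ac) *\<^sub>v u = z \<cdot>\<^sub>v u" .
  then have "eigenvector (Bc * Ac) u z" unfolding eigenvector_def using u u0 Bc Ac by simp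
  then show ?thesis unfolding BA eigenvalue_def by blast
qed

theorem theorem6p2:
  fixes A :: "real mat" and n m :: nat
  assumes "A \<in> carrier_mat n m" and "n \<ge> 2"
    and "steady A (transpose_mat A)"
  shows "((\<forall>j<m. card {i. i < n \<and> A $$ (i,j) \<noteq> 0} \<le> 2) \<longrightarrow>
            (\<forall>B \<in> Q0 (transpose_mat A).
               P0_matrix (A * B) \<and> P0_matrix (compound2 (A * B)) \<and> positive_semistable (A * B)))
       \<and> ((\<forall>i<n. card {j. j < m \<and> A $$ (i,j) \<noteq> 0} \<le> 2) \<longrightarrow>
            (\<forall>B \<in> Q0 (transpose_mat A). positive_semistable (A * B)))"
proof -
  note A = assms(1) and st = assms(3)
  have part1: "(\<forall>j<m. card {i. i < n \<and> A $$ (i,j) \<noteq> 0} \<le> 2) \<longrightarrow>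
            (\<forall>B \<in> Q0 (transpose_mat A).
               P0_matrix (A * B) \<and> P0_matrix (compound2 (A * B)) \<and> positive_semistable (A * B))"
  proof (intro impI ballI)
    assume cols: "\<forall>j<m. card {i. i < n \<and> A $$ (i,j) \<noteq> 0} \<le> 2"
    fix B assume B: "B \<in> Q0 (transpose_mat A)"
    have Bc: "B \<in> carrier_mat m n" using B A unfolding Q0_def by auto
    have M: "A * B \<in> carrier_mat n n" using A Bc by simp
    from weights[OF A st cols] obtain w :: "nat \<Rightarrow> real" where wp: "\<forall>a<n. w a > 0"
      and wc: "\<forall>c<m. \<forall>a<n. \<forall>b<n. a \<noteq> b \<longrightarrow> A$$(a,c) \<noteq> 0 \<longrightarrow> A$$(b,c) \<noteq> 0 \<longrightarrow> w a * \<bar>A$$(a,c)\<bar> = w b * \<bar>A$$(b,c)\<bar>"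
      by blast
    have r: "rdd (transpose_mat (A * B)) n w" by (rule AB_rdd[OF A B cols wp wc])
    have C: "compound2 (A * B) \<in> carrier_mat (length (wedge_pairs n)) (length (wedge_pairs n))"
      using M A unfolding compound2_def Let_def by simp
    show "P0_matrix (A * B) \<and> P0_matrix (compound2 (A * B)) \<and> positive_semistable (A * B)"
    proof (intro conjI)
      show "P0_matrix (A * B)" by (rule rdd_P0[OF r M])
      show "P0_matrix (compound2 (A * B))" by (rule rdd_P0[OF compound_rdd[OF r M] C])
      show "positive_semistable (A * B)" by (rule rdd_semistable[OF r M])
    qed
  qed
  have part2: "(\<forall>i<n. card {j. j < m \<and> A $$ (i,j) \<noteq> 0} \<le> 2) \<longrightarrow>
            (\<forall>B \<in> Q0 (transpose_mat A). positive_semistable (A * B))"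
  proof (intro impI ballI)
    assume rows: "\<forall>i<n. card {j. j < m \<and> A $$ (i,j) \<noteq> 0} \<le> 2"
    fix B assume B: "B \<in> Q0 (transpose_mat A)"
    have Bc: "B \<in> carrier_mat m n" using B A unfolding Q0_def by auto
    have M: "A * B \<in> carrier_mat n n" using A Bc by simp
    define A' where "A' = transpose_mat A"
    have A': "A' \<in> carrier_mat m n" unfolding A'_def using A by simp
    have cols': "\<forall>c<n. card {a. a < m \<and> A' $$ (a,c) \<noteq> 0} \<le> 2"
    proof (intro allI impI)
      fix c assume c: "c < n"
      have "{a. a < m \<and> A' $$ (a,c) \<noteq> 0} = {j. j < m \<and> A $$ (c,j) \<noteq> 0}"
      proof (rule Collect_cong)
        fix a show "(a < m \<and> A' $$ (a,c) \<noteq> 0) = (a < m \<and> A $$ (c,a) \<noteq> 0)"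
          using A c unfolding A'_def by auto
      qed
      moreover have "card {j. j < m \<and> A $$ (c,j) \<noteq> 0} \<le> 2" using rows c by blast
      ultimately show "card {a. a < m \<and> A' $$ (a,c) \<noteq> 0} \<le> 2" by (simp only:)
    qed
    have st': "steady A' (transpose_mat A')"
      unfolding A'_def transpose_transpose by (rule steady_transpose[OF A st])
    have B': "transpose_mat B \<in> Q0 (transpose_mat A')"
      unfolding A'_def transpose_transpose by (rule Q0_transpose[OF A B])
    from weights[OF A' st' cols'] obtain v :: "nat \<Rightarrow> real" where vp: "\<forall>a<m. v a > 0"
      and vc: "\<forall>c<n. \<forall>a<m. \<forall>b<m. a \<noteq> b \<longrightarrow> A'$$(a,c) \<noteq> 0 \<longrightarrow> A'$$(b,c) \<noteq> 0 \<longrightarrow> v a * \<bar>A'$$(a,c)\<bar> = v b * \<bar>A'$$(b,c)\<bar>"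
      by blast
    have r: "rdd (transpose_mat (A' * transpose_mat B)) m v" by (rule AB_rdd[OF A' B' cols' vp vc])
    have "transpose_mat (A' * transpose_mat B) = B * A"
    proof -
      have "transpose_mat (A' * transpose_mat B) = transpose_mat (transpose_mat B) * transpose_mat A'"
        by (rule transpose_mult[OF A']) (use Bc in simp)
      then show ?thesis unfolding A'_def by simp
    qed
    with r have rBA: "rdd (B * A) m v" by simp
    show "positive_semistable (A * B)"
      unfolding positive_semistable_def
    proof (intro conjI allI impI)
      show "square_mat (A * B)" using A Bc by simp
      fix z assume ev: "eigenvalue (map_mat complex_of_real (A * B)) z"
      show "Re z \<ge> 0"
      proof (cases "z = 0")
        case True then show ?thesis by simp
      next
        case False
        from eig_swap[OF A Bc ev False] show ?thesis by (rule rdd_eig_re[OF rBA])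
      qed
    qed
  qed
  from part1 part2 show ?thesis by blast
qed

end
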